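(* Fix integers $n\ge 2$, $k\ge 1$, a horizon $T$, and a subpopulation distribution $\mathbf p=(p_1,\dots,p_k)$ with all $p_j>0$ and $\sum_j p_j=1$, known to the agent. For every policy $\pi$ (with arbitrary, possibly history-dependent, subpopulation and treatment selection rules), $$\mathrm{SR}(\pi,T,\mathbf p)\in\Omega\Big(\sqrt{\tfrac{n}{T}}\,\|\mathbf p\|_{2/3}\Big),$$ where $\|\mathbf p\|_{2/3}=\big(\sum_{j=1}^k p_j^{2/3}\big)^{3/2}$.
   Context: Bandit with subpopulations: there are $n$ treatments and $k$ subpopulations (contexts). For each pair $(i,j)\in[n]\times[k]$ there is a reward distribution $\nu_{i,j}$ supported on $[0,1]$ with mean $\mu_{i,j}$; $\boldsymbol\nu=(\nu_{i,j})$. The subpopulation distribution is $\mathbf p$ with $\Pr(C=j)=p_j>0$. For $T$ rounds: (1) a subpopulation $C_t$ is either drawn from $\mathbf p$ and revealed (passive round) or chosen by the agent based on the history $(A_s,C_s,Y_s)_{s<t}$ and $\mathbf p$ (active round); (2) the agent picks treatment $A_t\in[n]$ based on the history and $C_t$; (3) the agent observes $Y_t\sim\nu_{A_t,C_t}$ independently. After $T$ rounds the agent outputs for each $j$ a recommended treatment $\hat a_j$. A policy $\pi$ consists of all these sampling decisions and the recommendation rule. The simple regret on instance $(\boldsymbol\nu,\mathbf p)$ is $\mathrm{SR}(\pi,T,(\boldsymbol\nu,\mathbf p))=\sum_j p_j\,\mathbb E[\mu_{a_j^*,j}-\mu_{\hat a_j,j}]$ with $a_j^*\in\arg\max_i\mu_{i,j}$,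 and the worst-case simple regret is $\mathrm{SR}(\pi,T,\mathbf p)=\sup_{\boldsymbol\nu}\mathrm{SR}(\pi,T,(\boldsymbol\nu,\mathbf p))$, the supremum over all reward distribution matrices supported on $[0,1]$. The paper works in the data-rich regime $T\gg n,k,1/\min_j p_j$. Asymptotic notation hides universal constants. *)

theory Defs
  imports "HOL-Probability.Probability"
begin

text \<open>Treatments are 0..<n, subpopulations 0..<k. A history is the list of
  observed triples (A_s, C_s, Y_s).\<close>

type_synonym hist = "(nat \<times> nat \<times> real) list"

text \<open>A (randomized, history-dependent) policy: a subpopulation selection rule
  (a passive round corresponds to the rule returning the distribution p),
  a treatment selection rule, and a recommendation rule.\<close>

record policy =
  ctx_rule :: "hist \<Rightarrow> nat pmf"
  arm_rule :: "hist \<Rightarrow> nat \<Rightarrow> nat pmf"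
  rec_rule :: "hist \<Rightarrow> nat \<Rightarrow> nat pmf"

definition valid_policy :: "nat \<Rightarrow> nat \<Rightarrow> policy \<Rightarrow> bool" where
  "valid_policy n k \<pi> \<longleftrightarrow>
     (\<forall>h. set_pmf (ctx_rule \<pi> h) \<subseteq> {..<k}) \<and>
     (\<forall>h c. set_pmf (arm_rule \<pi> h c) \<subseteq> {..<n}) \<and>
     (\<forall>h j. set_pmf (rec_rule \<pi> h j) \<subseteq> {..<n})"

text \<open>Reward distribution matrix: nu i j is the reward distribution of treatment i
  in subpopulation j, supported on [0,1].\<close>

definition valid_instance :: "(nat \<Rightarrow> nat \<Rightarrow> real pmf) \<Rightarrow> bool" where
  "valid_instance \<nu> \<longleftrightarrow> (\<forall>i j. set_pmf (\<nu> i j) \<subseteq> {0..1})"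

definition mean_reward :: "(nat \<Rightarrow> nat \<Rightarrow> real pmf) \<Rightarrow> nat \<Rightarrow> nat \<Rightarrow> real" where
  "mean_reward \<nu> i j = measure_pmf.expectation (\<nu> i j) (\<lambda>y. y)"

fun history :: "policy \<Rightarrow> (nat \<Rightarrow> nat \<Rightarrow> real pmf) \<Rightarrow> nat \<Rightarrow> hist pmf" where
  "history \<pi> \<nu> 0 = return_pmf []"
| "history \<pi> \<nu> (Suc t) =
     bind_pmf (history \<pi> \<nu> t) (\<lambda>h.
       bind_pmf (ctx_rule \<pi> h) (\<lambda>c.
         bind_pmf (arm_rule \<pi> h c) (\<lambda>a.
           map_pmf (\<lambda>y. h @ [(a, c, y)]) (\<nu> a c))))"

definition best_mean :: "nat \<Rightarrow> (nat \<Rightarrow> nat \<Rightarrow> real pmf) \<Rightarrow> nat \<Rightarrow> real" where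
  "best_mean n \<nu> j = Max ((\<lambda>i. mean_reward \<nu> i j) ` {..<n})"

definition simple_regret ::
  "nat \<Rightarrow> nat \<Rightarrow> policy \<Rightarrow> nat \<Rightarrow> (nat \<Rightarrow> nat \<Rightarrow> real pmf) \<Rightarrow> (nat \<Rightarrow> real) \<Rightarrow> real" where
  "simple_regret n k \<pi> T \<nu> p =
     (\<Sum>j<k. p j * measure_pmf.expectation
                     (bind_pmf (history \<pi> \<nu> T) (\<lambda>h. rec_rule \<pi> h j))
                     (\<lambda>a. best_mean n \<nu> j - mean_reward \<nu> a j))"

definition worst_simple_regret ::
  "nat \<Rightarrow> nat \<Rightarrow> policy \<Rightarrow> nat \<Rightarrow> (nat \<Rightarrow> real) \<Rightarrow> real" where
  "worst_simple_regret n k \<pi> T p =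
     (SUP \<nu> \<in> {\<nu>. valid_instance \<nu>}. simple_regret n k \<pi> T \<nu> p)"

definition norm_two_thirds :: "nat \<Rightarrow> (nat \<Rightarrow> real) \<Rightarrow> real" where
  "norm_two_thirds k p = (\<Sum>j<k. p j powr (2/3)) powr (3/2)"

end

theory Submission
  imports Defs
begin

fun hist' :: "policy \<Rightarrow> (hist \<Rightarrow> nat \<Rightarrow> nat \<Rightarrow> real pmf) \<Rightarrow> nat \<Rightarrow> hist pmf" where
  "hist' \<pi> R 0 = return_pmf []"
| "hist' \<pi> R (Suc t) =
     bind_pmf (hist' \<pi> R t) (\<lambda>h.
       bind_pmf (ctx_rule \<pi> h) (\<lambda>c.
         bind_pmf (arm_rule \<pi> h c) (\<lambda>a.
           map_pmf (\<lambda>y. h @ [(a, c, y)]) (R h a c))))"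

lemma history_hist': "history \<pi> \<nu> t = hist' \<pi> (\<lambda>h a c. \<nu> a c) t"
  by (induction t) auto

lemma hist'_length: "h \<in> set_pmf (hist' \<pi> R t) \<Longrightarrow> length h = t"
  by (induction t arbitrary: h) auto

lemma coupling_nn:
  fixes bad :: "hist \<Rightarrow> bool"
  assumes mono: "\<And>h x. bad h \<Longrightarrow> bad (h @ [x])"
  and diff: "\<And>h a c y. R1 h a c \<noteq> R2 h a c \<Longrightarrow> bad (h @ [(a, c, y)])"
  shows "(\<integral>\<^sup>+h. (if bad h then 0 else f h) \<partial>hist' \<pi> R1 t) =
         (\<integral>\<^sup>+h. (if bad h then 0 else f h) \<partial>hist' \<pi> R2 t)"
proof (induction t arbitrary: f)
  case 0
  then show ?case by simp
next
  case (Suc t)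
  define I where "I = (\<lambda>R h. \<integral>\<^sup>+c. \<integral>\<^sup>+a. \<integral>\<^sup>+y. (if bad (h @ [(a,c,y)]) then 0 else f (h @ [(a,c,y)]))
      \<partial>R h a c \<partial>arm_rule \<pi> h c \<partial>ctx_rule \<pi> h)"
  have eq: "I R1 h = (if bad h then 0 else I R2 h)" for h
  proof (cases "bad h")
    case True
    then show ?thesis by (simp add: I_def mono)
  next
    case False
    have "(\<integral>\<^sup>+y. (if bad (h @ [(a,c,y)]) then 0 else f (h @ [(a,c,y)])) \<partial>R1 h a c) =
          (\<integral>\<^sup>+y. (if bad (h @ [(a,c,y)]) then 0 else f (h @ [(a,c,y)])) \<partial>R2 h a c)" for a c
    proof (cases "R1 h a c = R2 h a c")
      case True then show ?thesis by simp
    next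
      case False then show ?thesis using diff[OF False] by simp
    qed
    then show ?thesis using False by (simp add: I_def)
  qed
  have eq2: "I R2 h = (if bad h then 0 else I R2 h)" for h
    by (cases "bad h") (auto simp add: I_def mono)
  have "(\<integral>\<^sup>+h. (if bad h then 0 else f h) \<partial>hist' \<pi> R1 (Suc t)) = (\<integral>\<^sup>+h. I R1 h \<partial>hist' \<pi> R1 t)"
    by (simp add: I_def)
  also have "\<dots> = (\<integral>\<^sup>+h. (if bad h then 0 else I R2 h) \<partial>hist' \<pi> R1 t)"
    by (simp add: eq)
  also have "\<dots> = (\<integral>\<^sup>+h. (if bad h then 0 else I R2 h) \<partial>hist' \<pi> R2 t)"
    by (rule Suc)
  also have "\<dots> = (\<integral>\<^sup>+h. I R2 h \<partial>hist' \<pi> R2 t)"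
    using eq2 by metis
  also have "\<dots> = (\<integral>\<^sup>+h. (if bad h then 0 else f h) \<partial>hist' \<pi> R2 (Suc t))"
    by (simp add: I_def)
  finally show ?case .
qed

definition Lik :: "(hist \<Rightarrow> nat \<Rightarrow> nat \<Rightarrow> real \<Rightarrow> real) \<Rightarrow> hist \<Rightarrow> real" where
  "Lik r h = (\<Prod>s<length h. r (take s h) (fst (h!s)) (fst (snd (h!s))) (snd (snd (h!s))))"

definition Sadd :: "(hist \<Rightarrow> nat \<Rightarrow> nat \<Rightarrow> real \<Rightarrow> real) \<Rightarrow> hist \<Rightarrow> real" where
  "Sadd r h = (\<Sum>s<length h. r (take s h) (fst (h!s)) (fst (snd (h!s))) (snd (snd (h!s))))"

lemma Lik_Nil[simp]: "Lik r [] = 1" by (simp add: Lik_def)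
lemma Sadd_Nil[simp]: "Sadd r [] = 0" by (simp add: Sadd_def)

lemma Lik_snoc[simp]: "Lik r (h @ [(a,c,y)]) = Lik r h * r h a c y"
proof -
  have "Lik r (h @ [(a,c,y)]) = (\<Prod>s<Suc (length h). r (take s (h @ [(a,c,y)])) (fst ((h @ [(a,c,y)])!s))
     (fst (snd ((h @ [(a,c,y)])!s))) (snd (snd ((h @ [(a,c,y)])!s))))"
    by (simp add: Lik_def)
  also have "\<dots> = Lik r h * r h a c y"
    unfolding prod.lessThan_Suc Lik_def
    by (auto intro!: prod.cong simp: nth_append)
  finally show ?thesis .
qed

lemma Sadd_snoc[simp]: "Sadd r (h @ [(a,c,y)]) = Sadd r h + r h a c y"
proof -
  have "Sadd r (h @ [(a,c,y)]) = (\<Sum>s<Suc (length h). r (take s (h @ [(a,c,y)])) (fst ((h @ [(a,c,y)])!s))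
     (fst (snd ((h @ [(a,c,y)])!s))) (snd (snd ((h @ [(a,c,y)])!s))))"
    by (simp add: Sadd_def)
  also have "\<dots> = Sadd r h + r h a c y"
    unfolding sum.lessThan_Suc Sadd_def
    by (auto intro!: sum.cong simp: nth_append)
  finally show ?thesis .
qed

lemma Lik_nonneg: "(\<And>h a c y. r h a c y \<ge> 0) \<Longrightarrow> Lik r h \<ge> 0"
  by (simp add: Lik_def prod_nonneg)

lemma density_nn:
  fixes R1 R2 :: "hist \<Rightarrow> nat \<Rightarrow> nat \<Rightarrow> real pmf"
  assumes dens: "\<And>h a c g. (\<integral>\<^sup>+y. g y \<partial>R2 h a c) = (\<integral>\<^sup>+y. ennreal (r h a c y) * g y \<partial>R1 h a c)"
  and rnn: "\<And>h a c y. r h a c y \<ge> 0"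
  shows "(\<integral>\<^sup>+h. f h \<partial>hist' \<pi> R2 t) = (\<integral>\<^sup>+h. ennreal (Lik r h) * f h \<partial>hist' \<pi> R1 t)"
proof (induction t arbitrary: f)
  case 0
  then show ?case by simp
next
  case (Suc t)
  define F where "F = (\<lambda>h. \<integral>\<^sup>+c. \<integral>\<^sup>+a. \<integral>\<^sup>+y. f (h @ [(a,c,y)])
      \<partial>R2 h a c \<partial>arm_rule \<pi> h c \<partial>ctx_rule \<pi> h)"
  have "(\<integral>\<^sup>+h. f h \<partial>hist' \<pi> R2 (Suc t)) = (\<integral>\<^sup>+h. F h \<partial>hist' \<pi> R2 t)"
    by (simp add: F_def)
  also have "\<dots> = (\<integral>\<^sup>+h. ennreal (Lik r h) * F h \<partial>hist' \<pi> R1 t)"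
    by (rule Suc)
  also have "\<dots> = (\<integral>\<^sup>+h. \<integral>\<^sup>+c. \<integral>\<^sup>+a. \<integral>\<^sup>+y. ennreal (Lik r (h @ [(a,c,y)])) * f (h @ [(a,c,y)])
      \<partial>R1 h a c \<partial>arm_rule \<pi> h c \<partial>ctx_rule \<pi> h \<partial>hist' \<pi> R1 t)"
  proof (intro nn_integral_cong)
    fix h
    show "ennreal (Lik r h) * F h = (\<integral>\<^sup>+c. \<integral>\<^sup>+a. \<integral>\<^sup>+y. ennreal (Lik r (h @ [(a,c,y)])) * f (h @ [(a,c,y)])
      \<partial>R1 h a c \<partial>arm_rule \<pi> h c \<partial>ctx_rule \<pi> h)"
      unfolding F_def dens
      by (simp add: nn_integral_cmult[symmetric] ennreal_mult' Lik_nonneg rnn mult.assoc)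
  qed
  also have "\<dots> = (\<integral>\<^sup>+h. ennreal (Lik r h) * f h \<partial>hist' \<pi> R1 (Suc t))"
    by simp
  finally show ?case .
qed

lemma Sadd_nonneg: "(\<And>h a c y. r h a c y \<ge> 0) \<Longrightarrow> Sadd r h \<ge> 0"
  by (simp add: Sadd_def sum_nonneg)

lemma nn3_add:
  fixes P :: "'c pmf" and M :: "'c \<Rightarrow> 'a pmf" and N :: "'c \<Rightarrow> 'a \<Rightarrow> 'b pmf"
  shows "(\<integral>\<^sup>+c. \<integral>\<^sup>+a. \<integral>\<^sup>+y. (K + B c a y) \<partial>N c a \<partial>M c \<partial>P) =
     K + (\<integral>\<^sup>+c. \<integral>\<^sup>+a. \<integral>\<^sup>+y. B c a y \<partial>N c a \<partial>M c \<partial>P)"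
  by (simp add: nn_integral_add measure_pmf.emeasure_space_1)

lemma additive_nn:
  fixes R :: "hist \<Rightarrow> nat \<Rightarrow> nat \<Rightarrow> real pmf"
  assumes ghat: "\<And>h a c. (\<integral>\<^sup>+y. ennreal (g h a c y) \<partial>R h a c) = ennreal (gh h a c)"
  and gnn: "\<And>h a c y. g h a c y \<ge> 0" and ghnn: "\<And>h a c. gh h a c \<ge> 0"
  shows "(\<integral>\<^sup>+h. ennreal (Sadd g h) \<partial>hist' \<pi> R t) =
         (\<integral>\<^sup>+h. ennreal (Sadd (\<lambda>h a c y. gh h a c) h) \<partial>hist' \<pi> R t)"
proof (induction t)
  case 0
  then show ?case by simp
next
  case (Suc t)
  define X where "X = (\<lambda>h. \<integral>\<^sup>+c. \<integral>\<^sup>+a. ennreal (gh h a c) \<partial>arm_rule \<pi> h c \<partial>ctx_rule \<pi> h)"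
  have "(\<integral>\<^sup>+h. ennreal (Sadd g h) \<partial>hist' \<pi> R (Suc t)) =
     (\<integral>\<^sup>+h. \<integral>\<^sup>+c. \<integral>\<^sup>+a. \<integral>\<^sup>+y. (ennreal (Sadd g h) + ennreal (g h a c y))
      \<partial>R h a c \<partial>arm_rule \<pi> h c \<partial>ctx_rule \<pi> h \<partial>hist' \<pi> R t)"
    by (simp add: ennreal_plus Sadd_nonneg gnn)
  also have "\<dots> = (\<integral>\<^sup>+h. ennreal (Sadd g h) + X h \<partial>hist' \<pi> R t)"
    by (simp only: nn3_add X_def ghat)
  also have "\<dots> = (\<integral>\<^sup>+h. ennreal (Sadd g h) \<partial>hist' \<pi> R t) + (\<integral>\<^sup>+h. X h \<partial>hist' \<pi> R t)"
    by (simp add: nn_integral_add)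
  also have "\<dots> = (\<integral>\<^sup>+h. ennreal (Sadd (\<lambda>h a c y. gh h a c) h) \<partial>hist' \<pi> R t) + (\<integral>\<^sup>+h. X h \<partial>hist' \<pi> R t)"
    using Suc by simp
  also have "\<dots> = (\<integral>\<^sup>+h. ennreal (Sadd (\<lambda>h a c y. gh h a c) h) + X h \<partial>hist' \<pi> R t)"
    by (simp add: nn_integral_add)
  also have "\<dots> = (\<integral>\<^sup>+h. \<integral>\<^sup>+c. \<integral>\<^sup>+a. \<integral>\<^sup>+y. (ennreal (Sadd (\<lambda>h a c y. gh h a c) h) + ennreal (gh h a c))
      \<partial>R h a c \<partial>arm_rule \<pi> h c \<partial>ctx_rule \<pi> h \<partial>hist' \<pi> R t)"
    by (simp only: nn3_add X_def) (simp add: measure_pmf.emeasure_space_1)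
  also have "\<dots> = (\<integral>\<^sup>+h. ennreal (Sadd (\<lambda>h a c y. gh h a c) h) \<partial>hist' \<pi> R (Suc t))"
    by (simp add: ennreal_plus Sadd_nonneg ghnn)
  finally show ?case .
qed

lemma int_hist:
  fixes B :: real
  assumes "\<And>h. length h = t \<Longrightarrow> \<bar>F h\<bar> \<le> B"
  shows "integrable (measure_pmf (hist' \<pi> R t)) F"
proof (rule measure_pmf.integrable_const_bound[where B=B])
  show "AE h in measure_pmf (hist' \<pi> R t). norm (F h) \<le> B"
    by (rule AE_pmfI) (simp add: assms hist'_length)
qed simp

lemma nn_real:
  assumes "\<And>h. F h \<ge> 0" "\<And>h. length h = t \<Longrightarrow> F h \<le> B"
  shows "(\<integral>\<^sup>+h. ennreal (F h) \<partial>hist' \<pi> R t) = ennreal (\<integral>h. F h \<partial>hist' \<pi> R t)"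
proof -
  have "integrable (measure_pmf (hist' \<pi> R t)) F"
    using assms by (intro int_hist[where B=B]) (auto simp: abs_of_nonneg)
  then show ?thesis using assms(1) by (intro nn_integral_eq_integral) auto
qed

lemma Lik_le:
  assumes "\<And>h a c y. 0 \<le> r h a c y" "\<And>h a c y. r h a c y \<le> B" "1 \<le> B"
  shows "Lik r h \<le> B ^ length h"
  unfolding Lik_def by (rule prod_le_power) (use assms in auto)

lemma coupling_real:
  fixes bad :: "hist \<Rightarrow> bool" and f :: "hist \<Rightarrow> real"
  assumes mono: "\<And>h x. bad h \<Longrightarrow> bad (h @ [x])"
  and diff: "\<And>h a c y. R1 h a c \<noteq> R2 h a c \<Longrightarrow> bad (h @ [(a, c, y)])"
  and f0: "\<And>h. 0 \<le> f h" and f1: "\<And>h. f h \<le> 1"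
  shows "(\<integral>h. f h \<partial>hist' \<pi> R1 t) \<le> (\<integral>h. f h \<partial>hist' \<pi> R2 t) + (\<integral>h. (if bad h then 1 else 0) \<partial>hist' \<pi> R1 t)"
proof -
  let ?g = "\<lambda>h. if bad h then 0 else f h"
  let ?b = "\<lambda>h. if bad h then f h else 0"
  have "(\<integral>\<^sup>+h. ennreal (?g h) \<partial>hist' \<pi> R1 t) = (\<integral>\<^sup>+h. ennreal (?g h) \<partial>hist' \<pi> R2 t)"
    using coupling_nn[of bad R1 R2, OF mono diff, where f="\<lambda>h. ennreal (f h)" and \<pi>=\<pi> and t=t] by (simp add: if_distrib cong: if_cong)
  then have "ennreal (\<integral>h. ?g h \<partial>hist' \<pi> R1 t) = ennreal (\<integral>h. ?g h \<partial>hist' \<pi> R2 t)"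
    by (subst (asm) (1 2) nn_real[where B=1]) (auto simp: f0 f1)
  then have eq: "(\<integral>h. ?g h \<partial>hist' \<pi> R1 t) = (\<integral>h. ?g h \<partial>hist' \<pi> R2 t)"
    by (subst (asm) ennreal_inj) (auto intro!: integral_nonneg_AE simp: f0)
  have i1: "integrable (measure_pmf (hist' \<pi> R1 t)) ?g" "integrable (measure_pmf (hist' \<pi> R1 t)) ?b"
     "integrable (measure_pmf (hist' \<pi> R1 t)) (\<lambda>h. if bad h then 1 else 0 :: real)"
     "integrable (measure_pmf (hist' \<pi> R2 t)) ?g" "integrable (measure_pmf (hist' \<pi> R2 t)) f"
    by (auto intro!: int_hist[where B=1] simp: f0 f1 abs_le_iff)
  have "(\<integral>h. f h \<partial>hist' \<pi> R1 t) = (\<integral>h. ?g h + ?b h \<partial>hist' \<pi> R1 t)"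
    by (intro Bochner_Integration.integral_cong) auto
  also have "\<dots> = (\<integral>h. ?g h \<partial>hist' \<pi> R1 t) + (\<integral>h. ?b h \<partial>hist' \<pi> R1 t)"
    by (intro Bochner_Integration.integral_add i1(1) i1(2))
  also have "(\<integral>h. ?b h \<partial>hist' \<pi> R1 t) \<le> (\<integral>h. (if bad h then 1 else 0) \<partial>hist' \<pi> R1 t)"
    using i1 by (intro integral_mono) (auto simp: f1)
  also have "(\<integral>h. ?g h \<partial>hist' \<pi> R1 t) \<le> (\<integral>h. f h \<partial>hist' \<pi> R2 t)"
    unfolding eq using i1 by (intro integral_mono) (auto simp: f0)
  finally show ?thesis by simp
qed

lemma density_real:
  fixes R1 R2 :: "hist \<Rightarrow> nat \<Rightarrow> nat \<Rightarrow> real pmf" and f :: "hist \<Rightarrow> real"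
  assumes dens: "\<And>h a c g. (\<integral>\<^sup>+y. g y \<partial>R2 h a c) = (\<integral>\<^sup>+y. ennreal (r h a c y) * g y \<partial>R1 h a c)"
  and rnn: "\<And>h a c y. r h a c y \<ge> 0" and rB: "\<And>h a c y. r h a c y \<le> B" and B1: "1 \<le> B"
  and f0: "\<And>h. 0 \<le> f h" and f1: "\<And>h. f h \<le> 1"
  shows "(\<integral>h. f h \<partial>hist' \<pi> R2 t) = (\<integral>h. Lik r h * f h \<partial>hist' \<pi> R1 t)"
proof -
  have "ennreal (\<integral>h. f h \<partial>hist' \<pi> R2 t) = (\<integral>\<^sup>+h. ennreal (f h) \<partial>hist' \<pi> R2 t)"
    by (rule nn_real[where B=1, symmetric]) (auto simp: f0 f1)
  also have "\<dots> = (\<integral>\<^sup>+h. ennreal (Lik r h * f h) \<partial>hist' \<pi> R1 t)"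
    by (subst density_nn[OF dens rnn]) (simp add: ennreal_mult Lik_nonneg rnn f0)
  also have "\<dots> = ennreal (\<integral>h. Lik r h * f h \<partial>hist' \<pi> R1 t)"
  proof (rule nn_real[where B="B ^ t"])
    fix h show "0 \<le> Lik r h * f h" by (simp add: Lik_nonneg rnn f0)
  next
    fix h :: hist assume "length h = t"
    have "Lik r h \<le> B ^ length h" by (rule Lik_le[OF rnn rB B1])
    then have L1: "Lik r h \<le> B ^ t" using \<open>length h = t\<close> by simp
    have "0 \<le> Lik r h" by (rule Lik_nonneg[OF rnn])
    then have "Lik r h * f h \<le> Lik r h" using f1[of h] by (simp add: mult_left_le)
    with L1 show "Lik r h * f h \<le> B ^ t" by linarith
  qed
  finally show ?thesis
    by (subst (asm) ennreal_inj) (auto intro!: integral_nonneg_AE simp: f0 Lik_nonneg rnn)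
qed

lemma tang: fixes a x :: real assumes "0 < a" "0 < x" shows "ln x \<le> a - 1 + x / a - 1"
proof -
  have "ln (x / a) \<le> x / a - 1" using assms by (intro ln_le_minus_one) simp
  moreover have "ln (x / a) = ln x - ln a" using assms by (intro ln_divide_pos) auto
  moreover have "ln a \<le> a - 1" using assms by (intro ln_le_minus_one)
  ultimately show ?thesis by linarith
qed

lemma ln_pw:
  fixes x :: real assumes "x > 0"
  shows "\<bar>x - 1\<bar> \<le> 1/16 + 17 * (x - 1 - ln x)"
proof -
  have l0: "ln x \<le> x - 1" using assms by (rule ln_le_minus_one)
  show ?thesis
  proof (rule abs_leI)
    show "x - 1 \<le> 1/16 + 17 * (x - 1 - ln x)"
    proof (cases "x \<ge> 17/16")
      case True then show ?thesis using tang[of "17/16" x] assms by (simp add: field_simps)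
    next
      case False then show ?thesis using l0 by argo
    qed
  next
    show "- (x - 1) \<le> 1/16 + 17 * (x - 1 - ln x)"
    proof (cases "x \<le> 15/16")
      case True then show ?thesis using tang[of "15/16" x] assms by (simp add: field_simps)
    next
      case False then show ?thesis using l0 by argo
    qed
  qed
qed

lemma kl_aux: fixes A B L y :: real
  assumes "A + B = L" "-y - 2*(y*y) \<le> L" "y*y \<le> (1/4)*y" "0 \<le> y"
  shows "(1/2) * (- A - B) \<le> y"
  using assms by argo

lemma kl_bound:
  fixes d :: real assumes "0 \<le> d" "d \<le> 1/4"
  shows "(1/2) * (- ln (1 - 2*d) - ln (1 + 2*d)) \<le> 4 * d^2"
proof -
  have "ln (1 - 2*d) + ln (1 + 2*d) = ln ((1 - 2*d) * (1 + 2*d))"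
    using assms by (intro ln_mult_pos[symmetric]) auto
  also have "(1 - 2*d) * (1 + 2*d) = 1 - 4*d^2" by (simp add: algebra_simps power2_eq_square)
  finally have e: "ln (1 - 2*d) + ln (1 + 2*d) = ln (1 - 4*d^2)" .
  have "d*d \<le> (1/4)*(1/4)" using assms by (intro mult_mono) auto
  then have d2: "4*d^2 \<le> 1/4" by (simp add: power2_eq_square)
  have d3: "0 \<le> 4*d^2" by simp
  have "- (4*d^2) - 2 * (4*d^2)\<^sup>2 \<le> ln (1 - 4*d^2)"
    using d2 d3 by (intro ln_one_minus_pos_lower_bound) auto
  then have l: "- (4*d^2) - 2 * ((4*d^2) * (4*d^2)) \<le> ln (1 - 4*d^2)" by (simp only: power2_eq_square)
  have m: "(4*d^2) * (4*d^2) \<le> (1/4) * (4*d^2)" using d2 d3 by (intro mult_right_mono) auto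
  show ?thesis by (rule kl_aux[OF e l m d3])
qed

definition Bq :: "real \<Rightarrow> real pmf" where
  "Bq q = map_pmf (\<lambda>b. if b then 1 else 0) (bernoulli_pmf q)"

lemma nn_Bq: "0 \<le> q \<Longrightarrow> q \<le> 1 \<Longrightarrow> (\<integral>\<^sup>+y. g y \<partial>Bq q) = g 1 * ennreal q + g 0 * ennreal (1 - q)"
  by (simp add: Bq_def)

lemma mean_Bq: "0 \<le> q \<Longrightarrow> q \<le> 1 \<Longrightarrow> (\<integral>y. y \<partial>Bq q) = q"
  by (simp add: Bq_def)

lemma set_Bq: "set_pmf (Bq q) \<subseteq> {0, 1}"
  by (auto simp: Bq_def)

definition inst :: "(nat \<Rightarrow> real) \<Rightarrow> (nat \<Rightarrow> nat) \<Rightarrow> nat \<Rightarrow> nat \<Rightarrow> real pmf" where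
  "inst \<Delta> \<sigma> a c = (if a = \<sigma> c then Bq (1/2 + \<Delta> c) else Bq (1/2))"

definition cnt :: "nat \<Rightarrow> hist \<Rightarrow> nat" where
  "cnt j h = length (filter (\<lambda>x. fst (snd x) = j) h)"

lemma cnt_snoc[simp]: "cnt j (h @ [(a,c,y)]) = cnt j h + (if c = j then 1 else 0)"
  by (simp add: cnt_def)

definition RH :: "(nat \<Rightarrow> real) \<Rightarrow> (nat \<Rightarrow> nat) \<Rightarrow> nat \<Rightarrow> real \<Rightarrow> hist \<Rightarrow> nat \<Rightarrow> nat \<Rightarrow> real pmf" where
  "RH \<Delta> \<sigma> j m = (\<lambda>h a c. if c = j \<and> m \<le> real (cnt j h) then Bq (1/2) else inst \<Delta> \<sigma> a c)"

definition RZ :: "(nat \<Rightarrow> real) \<Rightarrow> (nat \<Rightarrow> nat) \<Rightarrow> nat \<Rightarrow> hist \<Rightarrow> nat \<Rightarrow> nat \<Rightarrow> real pmf" where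
  "RZ \<Delta> \<sigma> j = (\<lambda>h a c. inst (\<Delta>(j := 0)) \<sigma> a c)"

definition spc :: "nat \<Rightarrow> nat \<Rightarrow> real \<Rightarrow> hist \<Rightarrow> nat \<Rightarrow> nat \<Rightarrow> bool" where
  "spc i j m h a c \<longleftrightarrow> c = j \<and> a = i \<and> real (cnt j h) < m"

definition rr :: "(nat \<Rightarrow> real) \<Rightarrow> (nat \<Rightarrow> nat) \<Rightarrow> nat \<Rightarrow> real \<Rightarrow> hist \<Rightarrow> nat \<Rightarrow> nat \<Rightarrow> real \<Rightarrow> real" where
  "rr \<Delta> \<sigma> j m = (\<lambda>h a c y. if spc (\<sigma> j) j m h a c then (if y = 1 then 1 + 2 * \<Delta> j else 1 - 2 * \<Delta> j) else 1)"

lemma RH_RZ_nspc: "\<not> spc (\<sigma> j) j m h a c \<Longrightarrow> RH \<Delta> \<sigma> j m h a c = RZ \<Delta> \<sigma> j h a c"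
  by (auto simp: spc_def RH_def RZ_def inst_def)

lemma RH_spc: "spc (\<sigma> j) j m h a c \<Longrightarrow> RH \<Delta> \<sigma> j m h a c = Bq (1/2 + \<Delta> j)"
  by (auto simp: spc_def RH_def inst_def)

lemma RZ_spc: "spc (\<sigma> j) j m h a c \<Longrightarrow> RZ \<Delta> \<sigma> j h a c = Bq (1/2)"
  by (auto simp: spc_def RZ_def inst_def)

lemma ennreal_aux: "0 \<le> a \<Longrightarrow> 0 \<le> b \<Longrightarrow> ennreal a * x * ennreal b = x * ennreal (a * b)"
  by (simp add: ennreal_mult mult_ac)

lemma dens_HZ:
  assumes "0 \<le> \<Delta> j" "\<Delta> j \<le> 1/2"
  shows "(\<integral>\<^sup>+y. g y \<partial>RH \<Delta> \<sigma> j m h a c) = (\<integral>\<^sup>+y. ennreal (rr \<Delta> \<sigma> j m h a c y) * g y \<partial>RZ \<Delta> \<sigma> j h a c)"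
proof (cases "spc (\<sigma> j) j m h a c")
  case True
  have e1: "(1 + 2 * \<Delta> j) * (1/2) = 1/2 + \<Delta> j" "(1 - 2 * \<Delta> j) * (1/2) = 1 - (1/2 + \<Delta> j)"
    by (simp_all add: algebra_simps)
  have p1: "0 \<le> 1 + 2 * \<Delta> j" "0 \<le> 1 - 2 * \<Delta> j" "0 \<le> (1/2::real)" using assms by auto
  have A: "ennreal (1 + 2 * \<Delta> j) * g 1 * ennreal (1/2) = g 1 * ennreal (1/2 + \<Delta> j)"
    using ennreal_aux[OF p1(1) p1(3), of "g 1"] unfolding e1(1) .
  have B: "ennreal (1 - 2 * \<Delta> j) * g 0 * ennreal (1/2) = g 0 * ennreal (1 - (1/2 + \<Delta> j))"
    using ennreal_aux[OF p1(2) p1(3), of "g 0"] unfolding e1(2) .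
  have q1: "0 \<le> 1/2 + \<Delta> j" "1/2 + \<Delta> j \<le> 1" "0 \<le> (1/2::real)" "(1/2::real) \<le> 1" using assms by auto
  have "(\<integral>\<^sup>+y. g y \<partial>RH \<Delta> \<sigma> j m h a c) = g 1 * ennreal (1/2 + \<Delta> j) + g 0 * ennreal (1 - (1/2 + \<Delta> j))"
    unfolding RH_spc[of \<sigma> j m h a c \<Delta>, OF True] by (rule nn_Bq[OF q1(1,2)])
  also have "\<dots> = ennreal (1 + 2 * \<Delta> j) * g 1 * ennreal (1/2) + ennreal (1 - 2 * \<Delta> j) * g 0 * ennreal (1 - 1/2)"
    using A B by simp
  also have "\<dots> = (\<integral>\<^sup>+y. ennreal (rr \<Delta> \<sigma> j m h a c y) * g y \<partial>RZ \<Delta> \<sigma> j h a c)"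
    unfolding RZ_spc[of \<sigma> j m h a c \<Delta>, OF True] nn_Bq[OF q1(3,4)] using True by (simp add: rr_def)
  finally show ?thesis .
next
  case False
  then show ?thesis by (simp add: RH_RZ_nspc rr_def)
qed

lemma Sadd_le: "(\<And>h a c y. r h a c y \<le> B) \<Longrightarrow> Sadd r h \<le> real (length h) * B"
proof -
  assume a: "\<And>h a c y. r h a c y \<le> B"
  show ?thesis unfolding Sadd_def using sum_bounded_above[of "{..<length h}", OF a] by simp
qed

lemma Sadd_diff: "Sadd (\<lambda>h a c y. r1 h a c y - r2 h a c y) h = Sadd r1 h - Sadd r2 h"
  unfolding Sadd_def by (simp add: sum_subtractf)

lemma Sadd_cmult: "Sadd (\<lambda>h a c y. k * r h a c y) h = k * Sadd r h"
  unfolding Sadd_def by (simp add: sum_distrib_left)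

lemma Sadd_cong: "(\<And>h a c y. r1 h a c y = r2 h a c y) \<Longrightarrow> Sadd r1 h = Sadd r2 h"
  unfolding Sadd_def by simp

lemma additive_real:
  fixes R :: "hist \<Rightarrow> nat \<Rightarrow> nat \<Rightarrow> real pmf" and B :: real
  assumes ghat: "\<And>h a c. (\<integral>\<^sup>+y. ennreal (g h a c y) \<partial>R h a c) = ennreal (gh h a c)"
  and gnn: "\<And>h a c y. g h a c y \<ge> 0" and ghnn: "\<And>h a c. gh h a c \<ge> 0"
  and gB: "\<And>h a c y. g h a c y \<le> B" and ghB: "\<And>h a c. gh h a c \<le> B"
  shows "(\<integral>h. Sadd g h \<partial>hist' \<pi> R t) = (\<integral>h. Sadd (\<lambda>h a c y. gh h a c) h \<partial>hist' \<pi> R t)"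
proof -
  have "ennreal (\<integral>h. Sadd g h \<partial>hist' \<pi> R t) = (\<integral>\<^sup>+h. ennreal (Sadd g h) \<partial>hist' \<pi> R t)"
    by (rule nn_real[where B="real t * B", symmetric]) (use Sadd_nonneg gnn Sadd_le[OF gB] in auto)
  also have "\<dots> = (\<integral>\<^sup>+h. ennreal (Sadd (\<lambda>h a c y. gh h a c) h) \<partial>hist' \<pi> R t)"
    by (rule additive_nn[OF ghat gnn ghnn])
  also have "\<dots> = ennreal (\<integral>h. Sadd (\<lambda>h a c y. gh h a c) h \<partial>hist' \<pi> R t)"
    by (rule nn_real[where B="real t * B"]) (use Sadd_nonneg ghnn Sadd_le[of "\<lambda>h a c y. gh h a c", OF ghB] in auto)
  finally show ?thesis
    by (subst (asm) ennreal_inj) (auto intro!: integral_nonneg_AE Sadd_nonneg gnn ghnn)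
qed

lemma Sadd_abs: "(\<And>h a c y. \<bar>r h a c y\<bar> \<le> B) \<Longrightarrow> \<bar>Sadd r h\<bar> \<le> real (length h) * B"
proof -
  assume a: "\<And>h a c y. \<bar>r h a c y\<bar> \<le> B"
  have "Sadd r h \<le> real (length h) * B" by (rule Sadd_le) (use a abs_le_D1 in blast)
  moreover have "Sadd (\<lambda>h a c y. - r h a c y) h \<le> real (length h) * B" by (rule Sadd_le) (use a abs_le_D2 in blast)
  moreover have "Sadd (\<lambda>h a c y. - r h a c y) h = - Sadd r h" unfolding Sadd_def by (simp add: sum_negf)
  ultimately show ?thesis by linarith
qed

lemma rr_bounds:
  assumes "0 \<le> \<Delta> j" "\<Delta> j \<le> 1/4"
  shows "1/2 \<le> rr \<Delta> \<sigma> j m h a c y" "rr \<Delta> \<sigma> j m h a c y \<le> 2"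
  using assms by (auto simp: rr_def)

lemma ln_rr_abs:
  assumes "0 \<le> \<Delta> j" "\<Delta> j \<le> 1/4"
  shows "\<bar>ln (rr \<Delta> \<sigma> j m h a c y)\<bar> \<le> 1"
proof -
  have b: "1/2 \<le> rr \<Delta> \<sigma> j m h a c y" "rr \<Delta> \<sigma> j m h a c y \<le> 2" using rr_bounds[of \<Delta> j, OF assms] by auto
  have "ln (rr \<Delta> \<sigma> j m h a c y) \<le> rr \<Delta> \<sigma> j m h a c y - 1" using b by (intro ln_le_minus_one) auto
  moreover have "ln (1/2) \<le> ln (rr \<Delta> \<sigma> j m h a c y)" using b by (subst ln_le_cancel_iff) auto
  moreover have "ln (1/2::real) = - ln 2" by (simp add: ln_div)
  moreover have "ln (2::real) \<le> 1" using ln_2_less_1 by simp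
  ultimately show ?thesis using b by (simp add: abs_le_iff)
qed

lemma Lik_pos: "(\<And>h a c y. r h a c y > 0) \<Longrightarrow> Lik r h > 0"
  by (simp add: Lik_def prod_pos)

lemma ln_Lik: "(\<And>h a c y. r h a c y > 0) \<Longrightarrow> ln (Lik r h) = Sadd (\<lambda>h a c y. ln (r h a c y)) h"
  unfolding Lik_def Sadd_def by (subst ln_prod) (auto simp: less_imp_neq[symmetric])

definition GG :: "nat \<Rightarrow> nat \<Rightarrow> real \<Rightarrow> hist \<Rightarrow> real" where
  "GG i j m h = Sadd (\<lambda>h a c y. if spc i j m h a c then 1 else 0) h"

definition klv :: "real \<Rightarrow> real" where
  "klv d = (1/2) * (- ln (1 - 2*d) - ln (1 + 2*d))"

lemma GG_bounds: "0 \<le> GG i j m h" "GG i j m h \<le> real (length h)"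
  unfolding GG_def using Sadd_nonneg[of "\<lambda>h a c y. if spc i j m h a c then 1 else 0" h]
    Sadd_le[of "\<lambda>h a c y. if spc i j m h a c then 1 else 0" 1 h] by auto

lemma ghat_spc:
  fixes g :: "hist \<Rightarrow> nat \<Rightarrow> nat \<Rightarrow> real \<Rightarrow> real"
  assumes "\<And>h a c y. \<not> spc (\<sigma> j) j m h a c \<Longrightarrow> g h a c y = 0"
  and "\<And>h a c y. 0 \<le> g h a c y"
  shows "(\<integral>\<^sup>+y. ennreal (g h a c y) \<partial>RZ \<Delta> \<sigma> j h a c) =
     ennreal ((1/2) * (g h a c 1 + g h a c 0) * (if spc (\<sigma> j) j m h a c then 1 else 0))"
proof (cases "spc (\<sigma> j) j m h a c")
  case True
  have q: "0 \<le> (1/2::real)" "(1/2::real) \<le> 1" by auto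
  have "(\<integral>\<^sup>+y. ennreal (g h a c y) \<partial>RZ \<Delta> \<sigma> j h a c) = ennreal (g h a c 1) * ennreal (1/2) + ennreal (g h a c 0) * ennreal (1 - 1/2)"
    unfolding RZ_spc[of \<sigma> j m h a c \<Delta>, OF True] by (rule nn_Bq[OF q])
  also have "\<dots> = ennreal (g h a c 1 * (1/2)) + ennreal (g h a c 0 * (1/2))"
  proof -
    have n1: "0 \<le> g h a c 1" "0 \<le> g h a c 0" "(0::real) \<le> 1/2" "(1::real) - 1/2 = 1/2" using assms(2) by auto
    show ?thesis by (simp only: ennreal_mult[symmetric] n1)
  qed
  also have "\<dots> = ennreal (g h a c 1 * (1/2) + g h a c 0 * (1/2))"
    using assms(2)[of h a c 1] assms(2)[of h a c 0] by (intro ennreal_plus[symmetric]) auto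
  also have "\<dots> = ennreal ((1/2) * (g h a c 1 + g h a c 0))"
    by (rule arg_cong[where f=ennreal]) (simp add: algebra_simps)
  finally show ?thesis using True by simp
next
  case False
  then show ?thesis using assms(1)[OF False] by simp
qed

lemma E_lnL:
  assumes d: "0 \<le> \<Delta> j" "\<Delta> j \<le> 1/4"
  shows "(\<integral>h. ln (Lik (rr \<Delta> \<sigma> j m) h) \<partial>hist' \<pi> (RZ \<Delta> \<sigma> j) T) =
    - klv (\<Delta> j) * (\<integral>h. GG (\<sigma> j) j m h \<partial>hist' \<pi> (RZ \<Delta> \<sigma> j) T)"
proof -
  define a1 where "a1 = - ln (1 - 2 * \<Delta> j)"
  define a2 where "a2 = ln (1 + 2 * \<Delta> j)"
  define u1 where "u1 = (\<lambda>h a c (y::real). if spc (\<sigma> j) j m h a c \<and> y \<noteq> 1 then a1 else (0::real))"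
  define u2 where "u2 = (\<lambda>h a c (y::real). if spc (\<sigma> j) j m h a c \<and> y = 1 then a2 else (0::real))"
  define Z where "Z = hist' \<pi> (RZ \<Delta> \<sigma> j) T"
  have a1b: "0 \<le> a1" "a1 \<le> 1"
  proof -
    have "ln (1 - 2 * \<Delta> j) \<le> 0" using d by (subst ln_le_zero_iff) auto
    then show "0 \<le> a1" by (simp add: a1_def)
    have "ln (1/2) \<le> ln (1 - 2 * \<Delta> j)" using d by (subst ln_le_cancel_iff) auto
    moreover have "ln (1/2::real) = - ln 2" by (simp add: ln_div)
    moreover have "ln (2::real) \<le> 1" using ln_2_less_1 by simp
    ultimately show "a1 \<le> 1" by (simp add: a1_def)
  qed
  have a2b: "0 \<le> a2" "a2 \<le> 1"
  proof -
    show "0 \<le> a2" using d by (simp add: a2_def)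
    have "ln (1 + 2 * \<Delta> j) \<le> 1 + 2 * \<Delta> j - 1" using d by (intro ln_le_minus_one) auto
    then show "a2 \<le> 1" using d by (simp add: a2_def)
  qed
  have rpos: "\<And>h a c y. rr \<Delta> \<sigma> j m h a c y > 0" using rr_bounds(1)[of \<Delta> j, OF d] by (meson less_le_trans zero_less_divide_1_iff zero_less_numeral)
  have lnL: "ln (Lik (rr \<Delta> \<sigma> j m) h) = Sadd u2 h - Sadd u1 h" for h
  proof -
    have "ln (Lik (rr \<Delta> \<sigma> j m) h) = Sadd (\<lambda>h a c y. ln (rr \<Delta> \<sigma> j m h a c y)) h"
      by (rule ln_Lik) (rule rpos)
    also have "\<dots> = Sadd (\<lambda>h a c y. u2 h a c y - u1 h a c y) h"
      by (rule Sadd_cong) (auto simp: rr_def u1_def u2_def a1_def a2_def)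
    finally show ?thesis by (simp add: Sadd_diff)
  qed
  have E1: "(\<integral>h. Sadd u1 h \<partial>Z) = (1/2) * a1 * (\<integral>h. GG (\<sigma> j) j m h \<partial>Z)"
  proof -
    have "(\<integral>h. Sadd u1 h \<partial>Z) = (\<integral>h. Sadd (\<lambda>h a c y. (1/2) * (u1 h a c 1 + u1 h a c 0) * (if spc (\<sigma> j) j m h a c then 1 else 0)) h \<partial>Z)"
      unfolding Z_def
      by (rule additive_real[where B=1], rule ghat_spc) (use a1b in \<open>auto simp: u1_def\<close>)
    also have "\<dots> = (\<integral>h. (1/2) * a1 * GG (\<sigma> j) j m h \<partial>Z)"
      unfolding GG_def Sadd_cmult[symmetric] by (intro Bochner_Integration.integral_cong refl Sadd_cong) (auto simp: u1_def)
    finally show ?thesis by simp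
  qed
  have E2: "(\<integral>h. Sadd u2 h \<partial>Z) = (1/2) * a2 * (\<integral>h. GG (\<sigma> j) j m h \<partial>Z)"
  proof -
    have "(\<integral>h. Sadd u2 h \<partial>Z) = (\<integral>h. Sadd (\<lambda>h a c y. (1/2) * (u2 h a c 1 + u2 h a c 0) * (if spc (\<sigma> j) j m h a c then 1 else 0)) h \<partial>Z)"
      unfolding Z_def
      by (rule additive_real[where B=1], rule ghat_spc) (use a2b in \<open>auto simp: u2_def\<close>)
    also have "\<dots> = (\<integral>h. (1/2) * a2 * GG (\<sigma> j) j m h \<partial>Z)"
      unfolding GG_def Sadd_cmult[symmetric] by (intro Bochner_Integration.integral_cong refl Sadd_cong) (auto simp: u2_def)
    finally show ?thesis by simp
  qed
  have i1: "integrable (measure_pmf Z) (Sadd u1)" "integrable (measure_pmf Z) (Sadd u2)"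
    unfolding Z_def
    by (intro int_hist[where B="real T"]; use Sadd_abs[of u1 1] Sadd_abs[of u2 1] a1b a2b in \<open>force simp: u1_def u2_def\<close>)+
  have "(\<integral>h. ln (Lik (rr \<Delta> \<sigma> j m) h) \<partial>Z) = (\<integral>h. Sadd u2 h - Sadd u1 h \<partial>Z)"
    by (simp add: lnL)
  also have "\<dots> = (\<integral>h. Sadd u2 h \<partial>Z) - (\<integral>h. Sadd u1 h \<partial>Z)"
    by (rule Bochner_Integration.integral_diff[OF i1(2) i1(1)])
  also have "\<dots> = - klv (\<Delta> j) * (\<integral>h. GG (\<sigma> j) j m h \<partial>Z)"
    unfolding E1 E2 klv_def a1_def a2_def by (simp add: algebra_simps)
  finally show ?thesis unfolding Z_def .
qed

lemma key:
  fixes f :: "hist \<Rightarrow> real"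
  assumes d: "\<And>c. 0 \<le> \<Delta> c" "\<And>c. \<Delta> c \<le> 1/4"
  and f0: "\<And>h. 0 \<le> f h" and f1: "\<And>h. f h \<le> 1"
  shows "(\<integral>h. f h \<partial>hist' \<pi> (\<lambda>h a c. inst \<Delta> \<sigma> a c) T) \<le>
    (\<integral>h. f h \<partial>hist' \<pi> (RZ \<Delta> \<sigma> j) T) + 1/16 + 17 * klv (\<Delta> j) * (\<integral>h. GG (\<sigma> j) j m h \<partial>hist' \<pi> (RZ \<Delta> \<sigma> j) T)
    + (\<integral>h. (if m < real (cnt j h) then 1 else 0) \<partial>hist' \<pi> (\<lambda>h a c. inst \<Delta> \<sigma> a c) T)"
proof -
  define P where "P = hist' \<pi> (\<lambda>h a c. inst \<Delta> \<sigma> a c) T"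
  define H where "H = hist' \<pi> (RH \<Delta> \<sigma> j m) T"
  define Z where "Z = hist' \<pi> (RZ \<Delta> \<sigma> j) T"
  define L where "L = Lik (rr \<Delta> \<sigma> j m)"
  have dj: "0 \<le> \<Delta> j" "\<Delta> j \<le> 1/4" using d by auto
  have dj2: "0 \<le> \<Delta> j" "\<Delta> j \<le> 1/2" using d[of j] by auto
  have rnn: "\<And>h a c y. 0 \<le> rr \<Delta> \<sigma> j m h a c y" and rB: "\<And>h a c y. rr \<Delta> \<sigma> j m h a c y \<le> 2"
    using rr_bounds[of \<Delta> j, OF dj] by (auto intro: order_trans[of 0 "1/2"])
  have rpos: "\<And>h a c y. 0 < rr \<Delta> \<sigma> j m h a c y"
    using rr_bounds(1)[of \<Delta> j, OF dj] by (auto intro: less_le_trans[of 0 "1/2"])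
  have dens: "\<And>h a c g. (\<integral>\<^sup>+y. g y \<partial>RH \<Delta> \<sigma> j m h a c) = (\<integral>\<^sup>+y. ennreal (rr \<Delta> \<sigma> j m h a c y) * g y \<partial>RZ \<Delta> \<sigma> j h a c)"
    by (rule dens_HZ[of \<Delta> j, OF dj2])
  have s1: "(\<integral>h. f h \<partial>P) \<le> (\<integral>h. f h \<partial>H) + (\<integral>h. (if m < real (cnt j h) then 1 else 0) \<partial>P)"
    unfolding P_def H_def
  proof (rule coupling_real[OF _ _ f0 f1])
    show "m < real (cnt j h) \<Longrightarrow> m < real (cnt j (h @ [x]))" for h x
      by (auto simp: cnt_def)
    show "inst \<Delta> \<sigma> a c \<noteq> RH \<Delta> \<sigma> j m h a c \<Longrightarrow> m < real (cnt j (h @ [(a, c, y)]))" for h a c y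
      by (auto simp: RH_def split: if_splits)
  qed
  have s2: "(\<integral>h. f h \<partial>H) = (\<integral>h. L h * f h \<partial>Z)"
    unfolding H_def Z_def L_def by (rule density_real[OF dens rnn rB _ f0 f1]) simp
  have "(\<integral>h. 1 \<partial>H) = (\<integral>h. L h * 1 \<partial>Z)"
    unfolding H_def Z_def L_def by (rule density_real[OF dens rnn rB]) auto
  then have s3: "(\<integral>h. L h \<partial>Z) = 1" by simp
  have s4: "(\<integral>h. ln (L h) \<partial>Z) = - klv (\<Delta> j) * (\<integral>h. GG (\<sigma> j) j m h \<partial>Z)"
    unfolding Z_def L_def by (rule E_lnL[of \<Delta> j, OF dj])
  have Lpos: "\<And>h. 0 < L h" unfolding L_def by (rule Lik_pos) (rule rpos)
  have LB: "\<And>h. length h = T \<Longrightarrow> L h \<le> 2 ^ T"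
    unfolding L_def using Lik_le[OF rnn rB] by fastforce
  have iL: "integrable (measure_pmf Z) L"
    unfolding Z_def by (rule int_hist[where B="2^T"]) (use LB Lpos in \<open>auto simp: less_imp_le\<close>)
  have ilnL: "integrable (measure_pmf Z) (\<lambda>h. ln (L h))"
  proof (unfold Z_def, rule int_hist[where B="real T"])
    fix h :: hist assume "length h = T"
    have "ln (L h) = Sadd (\<lambda>h a c y. ln (rr \<Delta> \<sigma> j m h a c y)) h"
      unfolding L_def by (rule ln_Lik) (rule rpos)
    also have "\<bar>\<dots>\<bar> \<le> real (length h) * 1"
      by (rule Sadd_abs) (rule ln_rr_abs[of \<Delta> j, OF dj])
    finally show "\<bar>ln (L h)\<bar> \<le> real T" using \<open>length h = T\<close> by simp
  qed
  have iLf: "integrable (measure_pmf Z) (\<lambda>h. L h * f h)"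
  proof (unfold Z_def, rule int_hist[where B="2^T"])
    fix h :: hist assume "length h = T"
    have "\<bar>L h * f h\<bar> = L h * f h" using Lpos[of h] f0[of h] by simp
    also have "\<dots> \<le> L h" using Lpos[of h] f1[of h] by (intro mult_left_le) auto
    also have "\<dots> \<le> 2 ^ T" using LB \<open>length h = T\<close> by simp
    finally show "\<bar>L h * f h\<bar> \<le> 2 ^ T" .
  qed
  have if': "integrable (measure_pmf Z) f"
    unfolding Z_def by (rule int_hist[where B=1]) (use f0 f1 in auto)
  have iabs: "integrable (measure_pmf Z) (\<lambda>h. \<bar>L h - 1\<bar>)"
    using iL by auto
  have iLf1: "integrable (measure_pmf Z) (\<lambda>h. (L h - 1) * f h)"
    using iLf if' by (simp add: left_diff_distrib)
  have s5: "(\<integral>h. \<bar>L h - 1\<bar> \<partial>Z) \<le> 1/16 + 17 * ((\<integral>h. L h \<partial>Z) - 1 - (\<integral>h. ln (L h) \<partial>Z))"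
  proof -
    have "(\<integral>h. \<bar>L h - 1\<bar> \<partial>Z) \<le> (\<integral>h. 1/16 + 17 * (L h - 1 - ln (L h)) \<partial>Z)"
      using iabs iL ilnL by (intro integral_mono ln_pw Lpos) auto
    also have "\<dots> = 1/16 + 17 * ((\<integral>h. L h \<partial>Z) - 1 - (\<integral>h. ln (L h) \<partial>Z))"
      using iL ilnL by (simp add: measure_pmf.prob_space)
    finally show ?thesis .
  qed
  have s6: "(\<integral>h. L h * f h \<partial>Z) \<le> (\<integral>h. f h \<partial>Z) + (\<integral>h. \<bar>L h - 1\<bar> \<partial>Z)"
  proof -
    have "(\<integral>h. L h * f h \<partial>Z) = (\<integral>h. f h + (L h - 1) * f h \<partial>Z)"
      by (simp add: algebra_simps)
    also have "\<dots> = (\<integral>h. f h \<partial>Z) + (\<integral>h. (L h - 1) * f h \<partial>Z)"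
      by (rule Bochner_Integration.integral_add[OF if' iLf1])
    also have "(\<integral>h. (L h - 1) * f h \<partial>Z) \<le> (\<integral>h. \<bar>L h - 1\<bar> \<partial>Z)"
    proof (rule integral_mono[OF iLf1 iabs])
      fix h
      have "(L h - 1) * f h \<le> \<bar>L h - 1\<bar> * f h" using f0[of h] by (intro mult_right_mono) auto
      also have "\<dots> \<le> \<bar>L h - 1\<bar>" using f1[of h] by (intro mult_left_le) auto
      finally show "(L h - 1) * f h \<le> \<bar>L h - 1\<bar>" .
    qed
    finally show ?thesis by simp
  qed
  have s7: "(\<integral>h. \<bar>L h - 1\<bar> \<partial>Z) \<le> 1/16 + 17 * klv (\<Delta> j) * (\<integral>h. GG (\<sigma> j) j m h \<partial>Z)"
    using s5 unfolding s3 s4 by (simp add: algebra_simps)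
  show ?thesis
    using s1 s2 s6 s7 unfolding P_def[symmetric] Z_def[symmetric] by argo
qed

lemma V_bound:
  assumes "0 \<le> m"
  shows "Sadd (\<lambda>h a c y. if c = j \<and> real (cnt j h) < m then 1 else 0) h \<le> real (cnt j h) \<and>
         Sadd (\<lambda>h a c y. if c = j \<and> real (cnt j h) < m then 1 else 0) h \<le> m + 1"
proof (induction h rule: rev_induct)
  case Nil
  then show ?case using assms by simp
next
  case (snoc x h)
  obtain a c y where x: "x = (a, c, y)" by (cases x) auto
  show ?case using snoc by (auto simp: x)
qed

lemma sum_GG: 
  assumes "0 \<le> m"
  shows "(\<Sum>i<n. GG i j m h) \<le> m + 1"
proof -
  have "(\<Sum>i<n. GG i j m h) = Sadd (\<lambda>h a c y. \<Sum>i<n. if spc i j m h a c then 1 else 0) h"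
    unfolding GG_def Sadd_def by (rule sum.swap)
  also have "\<dots> \<le> Sadd (\<lambda>h a c y. if c = j \<and> real (cnt j h) < m then 1 else 0) h"
    unfolding Sadd_def
  proof (rule sum_mono)
    fix s
    let ?h = "take s h" and ?a = "fst (h!s)" and ?c = "fst (snd (h!s))"
    have "(\<Sum>i<n. if spc i j m ?h ?a ?c then 1 else (0::real)) = (\<Sum>i\<in>{..<n} \<inter> {?a}. if ?c = j \<and> real (cnt j ?h) < m then 1 else (0::real))"
      by (rule sum.mono_neutral_cong_right) (auto simp: spc_def)
    also have "\<dots> \<le> (if ?c = j \<and> real (cnt j ?h) < m then 1 else 0)"
      by (cases "?a < n") auto
    finally show "(\<Sum>i<n. if spc i j m ?h ?a ?c then 1 else (0::real)) \<le> (if ?c = j \<and> real (cnt j ?h) < m then 1 else 0)" .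
  qed
  also have "\<dots> \<le> m + 1" using V_bound[OF assms] by blast
  finally show ?thesis .
qed

lemma sum_cnt: "(\<Sum>j<k. real (cnt j h)) \<le> real (length h)"
proof (induction h rule: rev_induct)
  case Nil
  then show ?case by (simp add: cnt_def)
next
  case (snoc x h)
  obtain a c y where x: "x = (a, c, y)" by (cases x) auto
  have "(\<Sum>j<k. real (cnt j (h @ [x]))) = (\<Sum>j<k. real (cnt j h) + (if c = j then 1 else 0))"
    by (intro sum.cong) (auto simp: x)
  also have "\<dots> = (\<Sum>j<k. real (cnt j h)) + (\<Sum>j<k. if c = j then 1 else 0::real)"
    by (rule sum.distrib)
  also have "(\<Sum>j<k. if c = j then 1 else 0::real) \<le> 1"
    by (cases "c < k") (simp_all add: sum.delta)
  finally show ?case using snoc by simp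
qed

lemma sum_pmf_le1: "(\<Sum>i\<in>A. pmf M i) \<le> 1" if "finite A"
  using that measure_measure_pmf_finite[of A M, symmetric] measure_pmf.prob_le_1 by simp

lemma avg_swap:
  fixes F :: "(nat \<Rightarrow> nat) \<Rightarrow> nat \<Rightarrow> real"
  assumes j: "j \<in> I" and fA: "finite A" and fI: "finite I"
  and inv: "\<And>\<sigma> i i'. \<sigma> \<in> PiE I (\<lambda>_. A) \<Longrightarrow> i' \<in> A \<Longrightarrow> F (\<sigma>(j := i')) i = F \<sigma> i"
  shows "real (card A) * (\<Sum>\<sigma>\<in>PiE I (\<lambda>_. A). F \<sigma> (\<sigma> j)) = (\<Sum>\<sigma>\<in>PiE I (\<lambda>_. A). \<Sum>i\<in>A. F \<sigma> i)"
proof -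
  let ?S = "PiE I (\<lambda>_. A)"
  define \<phi> where "\<phi> = (\<lambda>(\<tau>::nat \<Rightarrow> nat, i'::nat). (\<tau>(j := i'), \<tau> j))"
  have "(\<Sum>\<sigma>\<in>?S. \<Sum>i\<in>A. F \<sigma> i) = (\<Sum>(\<sigma>, i)\<in>?S \<times> A. F \<sigma> i)"
    by (rule sum.cartesian_product)
  also have "\<dots> = (\<Sum>(\<tau>, i')\<in>?S \<times> A. F \<tau> (\<tau> j))"
  proof (rule sum.reindex_bij_witness[where i=\<phi> and j=\<phi>])
    fix x assume "x \<in> ?S \<times> A"
    then show "\<phi> (\<phi> x) = x" by (auto simp: \<phi>_def split: prod.splits)
  next
    fix x assume "x \<in> ?S \<times> A"
    then show "\<phi> x \<in> ?S \<times> A" using j by (auto simp: \<phi>_def PiE_iff extensional_def split: prod.splits)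
  next
    fix x assume "x \<in> ?S \<times> A"
    then show "\<phi> (\<phi> x) = x" by (auto simp: \<phi>_def split: prod.splits)
  next
    fix x assume "x \<in> ?S \<times> A"
    then show "\<phi> x \<in> ?S \<times> A" using j by (auto simp: \<phi>_def PiE_iff extensional_def split: prod.splits)
  next
    fix x assume x: "x \<in> ?S \<times> A"
    obtain \<sigma> i where xe: "x = (\<sigma>, i)" by (cases x)
    show "(case \<phi> x of (\<tau>, i') \<Rightarrow> F \<tau> (\<tau> j)) = (case x of (\<sigma>, i) \<Rightarrow> F \<sigma> i)"
      using x inv[of \<sigma> i i] by (simp add: xe \<phi>_def)
  qed
  also have "\<dots> = (\<Sum>\<tau>\<in>?S. \<Sum>i'\<in>A. F \<tau> (\<tau> j))"
    by (rule sum.cartesian_product[symmetric])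
  also have "\<dots> = real (card A) * (\<Sum>\<sigma>\<in>?S. F \<sigma> (\<sigma> j))"
    by (simp add: sum_distrib_left)
  finally show ?thesis ..
qed

lemma mean_inst: "0 \<le> \<Delta> c \<Longrightarrow> \<Delta> c \<le> 1/2 \<Longrightarrow>
   mean_reward (inst \<Delta> \<sigma>) a c = (if a = \<sigma> c then 1/2 + \<Delta> c else 1/2)"
  by (simp add: mean_reward_def inst_def mean_Bq)

lemma best_inst:
  assumes "\<sigma> j < n" "0 \<le> \<Delta> j" "\<Delta> j \<le> 1/2"
  shows "best_mean n (inst \<Delta> \<sigma>) j = 1/2 + \<Delta> j"
  unfolding best_mean_def
proof (rule Max_eqI)
  show "finite ((\<lambda>i. mean_reward (inst \<Delta> \<sigma>) i j) ` {..<n})" by simp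
  show "\<And>y. y \<in> (\<lambda>i. mean_reward (inst \<Delta> \<sigma>) i j) ` {..<n} \<Longrightarrow> y \<le> 1/2 + \<Delta> j"
    using assms by (auto simp: mean_inst)
  show "1/2 + \<Delta> j \<in> (\<lambda>i. mean_reward (inst \<Delta> \<sigma>) i j) ` {..<n}"
    using assms by (intro image_eqI[where x="\<sigma> j"]) (auto simp: mean_inst)
qed

lemma regret_term:
  assumes "\<sigma> j < n" "0 \<le> \<Delta> j" "\<Delta> j \<le> 1/2"
  shows "measure_pmf.expectation (bind_pmf M (\<lambda>h. rec_rule \<pi> h j))
     (\<lambda>a. best_mean n (inst \<Delta> \<sigma>) j - mean_reward (inst \<Delta> \<sigma>) a j) =
     \<Delta> j * (1 - (\<integral>h. pmf (rec_rule \<pi> h j) (\<sigma> j) \<partial>M))"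
proof -
  let ?B = "bind_pmf M (\<lambda>h. rec_rule \<pi> h j)"
  have "measure_pmf.expectation ?B (\<lambda>a. best_mean n (inst \<Delta> \<sigma>) j - mean_reward (inst \<Delta> \<sigma>) a j) =
        measure_pmf.expectation ?B (\<lambda>a. \<Delta> j - \<Delta> j * indicator {\<sigma> j} a)"
    using assms by (intro Bochner_Integration.integral_cong refl) (auto simp: best_inst mean_inst indicator_def)
  also have "\<dots> = \<Delta> j - \<Delta> j * measure_pmf.expectation ?B (indicator {\<sigma> j})"
  proof -
    have ii: "integrable (measure_pmf ?B) (indicator {\<sigma> j} :: nat \<Rightarrow> real)"
      by (rule measure_pmf.integrable_const_bound[where B=1]) auto
    show ?thesis using ii by (subst Bochner_Integration.integral_diff) (auto simp: measure_pmf.prob_space)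
  qed
  also have "measure_pmf.expectation ?B (indicator {\<sigma> j}) = pmf ?B (\<sigma> j)"
    by (simp add: measure_pmf_single)
  also have "\<dots> = (\<integral>h. pmf (rec_rule \<pi> h j) (\<sigma> j) \<partial>M)"
    by (rule pmf_bind)
  finally show ?thesis by (simp add: algebra_simps)
qed

lemma valid_inst: "valid_instance (inst \<Delta> \<sigma>)"
proof -
  have "set_pmf (Bq q) \<subseteq> {0..1}" for q using set_Bq[of q] by auto
  then show ?thesis unfolding valid_instance_def inst_def by simp
qed

lemma mean_bounds:
  assumes "valid_instance \<nu>"
  shows "0 \<le> mean_reward \<nu> i j" "mean_reward \<nu> i j \<le> 1"
proof -
  have "set_pmf (\<nu> i j) \<subseteq> {0..1}" using assms by (simp add: valid_instance_def)
  then have s: "\<And>y. y \<in> set_pmf (\<nu> i j) \<Longrightarrow> 0 \<le> y \<and> y \<le> 1" by auto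
  have int: "integrable (measure_pmf (\<nu> i j)) (\<lambda>y. y)"
    by (rule measure_pmf.integrable_const_bound[where B=1]) (auto intro!: AE_pmfI dest: s)
  show "0 \<le> mean_reward \<nu> i j" unfolding mean_reward_def
    by (rule integral_nonneg_AE) (auto intro!: AE_pmfI dest: s)
  show "mean_reward \<nu> i j \<le> 1" unfolding mean_reward_def
    by (rule measure_pmf.integral_le_const[OF int]) (auto intro!: AE_pmfI dest: s)
qed

lemma regret_le:
  assumes "valid_instance \<nu>" "n \<ge> 1" "\<And>j. j < k \<Longrightarrow> 0 \<le> p j"
  shows "simple_regret n k \<pi> T \<nu> p \<le> (\<Sum>j<k. p j)"
  unfolding simple_regret_def
proof (rule sum_mono)
  fix j assume j: "j \<in> {..<k}"
  let ?B = "bind_pmf (history \<pi> \<nu> T) (\<lambda>h. rec_rule \<pi> h j)"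
  have "0 \<in> {..<n}" using assms(2) by simp
  then have ne: "(\<lambda>i. mean_reward \<nu> i j) ` {..<n} \<noteq> {}" by blast
  have b1: "best_mean n \<nu> j \<le> 1" unfolding best_mean_def using ne mean_bounds[OF assms(1)] by (subst Max_le_iff) auto
  have b0: "0 \<le> best_mean n \<nu> j" unfolding best_mean_def using ne mean_bounds[OF assms(1), of 0 j] assms(2)
    by (subst Max_ge_iff) auto
  have g: "\<bar>best_mean n \<nu> j - mean_reward \<nu> a j\<bar> \<le> 1" for a
    using b0 b1 mean_bounds[OF assms(1), of a j] by auto
  have int: "integrable (measure_pmf ?B) (\<lambda>a. best_mean n \<nu> j - mean_reward \<nu> a j)"
    by (rule measure_pmf.integrable_const_bound[where B=1]) (use g in auto)
  have "measure_pmf.expectation ?B (\<lambda>a. best_mean n \<nu> j - mean_reward \<nu> a j) \<le> 1"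
    by (rule measure_pmf.integral_le_const[OF int]) (use g abs_le_D1 in blast)
  then show "p j * measure_pmf.expectation ?B (\<lambda>a. best_mean n \<nu> j - mean_reward \<nu> a j) \<le> p j"
    using assms(3)[of j] j by (simp add: mult_left_le)
qed

lemma worst_ge:
  assumes "n \<ge> 1" "\<And>j. j < k \<Longrightarrow> 0 \<le> p j"
  shows "simple_regret n k \<pi> T (inst \<Delta> \<sigma>) p \<le> worst_simple_regret n k \<pi> T p"
  unfolding worst_simple_regret_def
proof (rule cSUP_upper)
  show "inst \<Delta> \<sigma> \<in> {\<nu>. valid_instance \<nu>}" by (simp add: valid_inst)
  show "bdd_above ((\<lambda>\<nu>. simple_regret n k \<pi> T \<nu> p) ` {\<nu>. valid_instance \<nu>})"
    using regret_le[OF _ assms] by (auto intro!: bdd_aboveI)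
qed

definition Fz :: "policy \<Rightarrow> nat \<Rightarrow> (nat \<Rightarrow> real) \<Rightarrow> (nat \<Rightarrow> nat) \<Rightarrow> nat \<Rightarrow> real \<Rightarrow> nat \<Rightarrow> real" where
  "Fz \<pi> T \<Delta> \<sigma> j m i = (\<integral>h. pmf (rec_rule \<pi> h j) i \<partial>hist' \<pi> (RZ \<Delta> \<sigma> j) T)
      + 17 * klv (\<Delta> j) * (\<integral>h. GG i j m h \<partial>hist' \<pi> (RZ \<Delta> \<sigma> j) T)"

lemma RZ_upd: "RZ \<Delta> (\<sigma>(j := i')) j = RZ \<Delta> \<sigma> j"
  by (auto simp: RZ_def inst_def fun_eq_iff)

lemma Fz_inv: "Fz \<pi> T \<Delta> (\<sigma>(j := i')) j m i = Fz \<pi> T \<Delta> \<sigma> j m i"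
  by (simp add: Fz_def RZ_upd)

lemma klv_nonneg:
  fixes d :: real assumes "0 \<le> d" "d \<le> 1/4"
  shows "0 \<le> klv d"
proof -
  have "ln (1 - 2*d) + ln (1 + 2*d) = ln ((1 - 2*d) * (1 + 2*d))"
    using assms by (intro ln_mult_pos[symmetric]) auto
  also have "(1 - 2*d) * (1 + 2*d) = 1 - 4*d^2" by (simp add: algebra_simps power2_eq_square)
  also have "ln (1 - 4*d^2) \<le> 0"
  proof -
    have "d*d \<le> (1/4)*(1/4)" using assms by (intro mult_mono) auto
    then have "4*d^2 \<le> 1/4" by (simp add: power2_eq_square)
    then show ?thesis by (subst ln_le_zero_iff) auto
  qed
  finally show ?thesis unfolding klv_def by simp
qed

lemma Fz_sum:
  assumes "0 \<le> \<Delta> j" "\<Delta> j \<le> 1/4" "0 \<le> m"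
  shows "(\<Sum>i<n. Fz \<pi> T \<Delta> \<sigma> j m i) \<le> 1 + 17 * klv (\<Delta> j) * (m + 1)"
proof -
  define Z where "Z = hist' \<pi> (RZ \<Delta> \<sigma> j) T"
  have i1: "integrable (measure_pmf Z) (\<lambda>h. pmf (rec_rule \<pi> h j) i)" for i
    unfolding Z_def by (rule int_hist[where B=1]) (simp add: pmf_le_1)
  have i2: "integrable (measure_pmf Z) (\<lambda>h. GG i j m h)" for i
    unfolding Z_def by (rule int_hist[where B="real T"]) (use GG_bounds in auto)
  have "(\<Sum>i<n. Fz \<pi> T \<Delta> \<sigma> j m i) = (\<integral>h. (\<Sum>i<n. pmf (rec_rule \<pi> h j) i) \<partial>Z)
      + 17 * klv (\<Delta> j) * (\<integral>h. (\<Sum>i<n. GG i j m h) \<partial>Z)"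
    unfolding Fz_def Z_def[symmetric]
    by (simp add: Bochner_Integration.integral_sum[OF i1] Bochner_Integration.integral_sum[OF i2] sum.distrib sum_distrib_left)
  also have "(\<integral>h. (\<Sum>i<n. pmf (rec_rule \<pi> h j) i) \<partial>Z) \<le> 1"
    by (rule measure_pmf.integral_le_const) (auto intro!: sum_pmf_le1 integrable_sum i1)
  also have "(\<integral>h. (\<Sum>i<n. GG i j m h) \<partial>Z) \<le> m + 1"
    by (rule measure_pmf.integral_le_const) (auto intro!: sum_GG integrable_sum i2 assms(3))
  finally show ?thesis
    using klv_nonneg[OF assms(1,2)] by (simp add: mult_left_mono)
qed

lemma ctx_bound:
  assumes d: "\<And>c. 0 \<le> \<Delta> c" "\<And>c. \<Delta> c \<le> 1/4" and m: "0 < m"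
  shows "(\<integral>h. pmf (rec_rule \<pi> h j) (\<sigma> j) \<partial>hist' \<pi> (\<lambda>h a c. inst \<Delta> \<sigma> a c) T) \<le>
    Fz \<pi> T \<Delta> \<sigma> j m (\<sigma> j) + 1/16 + (\<integral>h. real (cnt j h) \<partial>hist' \<pi> (\<lambda>h a c. inst \<Delta> \<sigma> a c) T) / m"
proof -
  define P where "P = hist' \<pi> (\<lambda>h a c. inst \<Delta> \<sigma> a c) T"
  have k: "(\<integral>h. pmf (rec_rule \<pi> h j) (\<sigma> j) \<partial>P) \<le> Fz \<pi> T \<Delta> \<sigma> j m (\<sigma> j) + 1/16
     + (\<integral>h. (if m < real (cnt j h) then 1 else 0) \<partial>P)"
    unfolding P_def Fz_def using key[where \<Delta>=\<Delta> and f="\<lambda>h. pmf (rec_rule \<pi> h j) (\<sigma> j)" and \<pi>=\<pi> and T=T and \<sigma>=\<sigma> and j=j and m=m, OF d]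
    by (simp add: pmf_le_1 algebra_simps)
  have ic: "integrable (measure_pmf P) (\<lambda>h. real (cnt j h) / m)"
    unfolding P_def by (rule int_hist[where B="real T / m"])
      (use m in \<open>auto simp: cnt_def divide_right_mono\<close>)
  have ib: "integrable (measure_pmf P) (\<lambda>h. if m < real (cnt j h) then 1 else 0 :: real)"
    unfolding P_def by (rule int_hist[where B=1]) auto
  have "(\<integral>h. (if m < real (cnt j h) then 1 else 0) \<partial>P) \<le> (\<integral>h. real (cnt j h) / m \<partial>P)"
    by (rule integral_mono[OF ib ic]) (use m in auto)
  then show ?thesis using k unfolding P_def by simp
qed

lemma regret_lower:
  fixes \<Delta> :: "nat \<Rightarrow> real" and m :: "nat \<Rightarrow> real"
  assumes d: "\<And>c. 0 \<le> \<Delta> c" "\<And>c. \<Delta> c \<le> 1/4" and mpos: "\<And>j. j < k \<Longrightarrow> 0 < m j"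
  and \<sigma>: "\<And>j. j < k \<Longrightarrow> \<sigma> j < n" and pnn: "\<And>j. j < k \<Longrightarrow> 0 \<le> p j"
  and \<gamma>: "\<And>j. j < k \<Longrightarrow> p j * \<Delta> j / m j = \<gamma>" and \<gamma>0: "0 \<le> \<gamma>"
  shows "simple_regret n k \<pi> T (inst \<Delta> \<sigma>) p \<ge>
     (\<Sum>j<k. p j * \<Delta> j * (15/16 - Fz \<pi> T \<Delta> \<sigma> j (m j) (\<sigma> j))) - \<gamma> * real T"
proof -
  define P where "P = hist' \<pi> (\<lambda>h a c. inst \<Delta> \<sigma> a c) T"
  have d2: "\<Delta> c \<le> 1/2" for c using d(2)[of c] by argo
  have "simple_regret n k \<pi> T (inst \<Delta> \<sigma>) p = (\<Sum>j<k. p j * (\<Delta> j * (1 - (\<integral>h. pmf (rec_rule \<pi> h j) (\<sigma> j) \<partial>P))))"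
    unfolding simple_regret_def P_def history_hist'
  proof (intro sum.cong refl)
    fix j assume "j \<in> {..<k}"
    then show "p j * measure_pmf.expectation (hist' \<pi> (\<lambda>h a c. inst \<Delta> \<sigma> a c) T \<bind> (\<lambda>h. rec_rule \<pi> h j))
          (\<lambda>a. best_mean n (inst \<Delta> \<sigma>) j - mean_reward (inst \<Delta> \<sigma>) a j) =
         p j * (\<Delta> j * (1 - measure_pmf.expectation (hist' \<pi> (\<lambda>h a c. inst \<Delta> \<sigma> a c) T) (\<lambda>h. pmf (rec_rule \<pi> h j) (\<sigma> j))))"
      using regret_term[where \<sigma>=\<sigma> and j=j and n=n and \<Delta>=\<Delta> and M="hist' \<pi> (\<lambda>h a c. inst \<Delta> \<sigma> a c) T" and \<pi>=\<pi>]
        \<sigma>[of j] d(1)[of j] d2[of j] by simp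
  qed
  also have "\<dots> \<ge> (\<Sum>j<k. p j * \<Delta> j * (15/16 - Fz \<pi> T \<Delta> \<sigma> j (m j) (\<sigma> j)) - \<gamma> * (\<integral>h. real (cnt j h) \<partial>P))"
  proof (rule sum_mono)
    fix j assume j: "j \<in> {..<k}"
    have cb: "(\<integral>h. pmf (rec_rule \<pi> h j) (\<sigma> j) \<partial>P) \<le> Fz \<pi> T \<Delta> \<sigma> j (m j) (\<sigma> j) + 1/16 + (\<integral>h. real (cnt j h) \<partial>P) / m j"
      unfolding P_def by (rule ctx_bound[OF d]) (use mpos j in auto)
    have pd: "0 \<le> p j * \<Delta> j" using pnn[of j] d(1)[of j] j by simp
    have "p j * \<Delta> j * (15/16 - Fz \<pi> T \<Delta> \<sigma> j (m j) (\<sigma> j)) - \<gamma> * (\<integral>h. real (cnt j h) \<partial>P)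
        = p j * \<Delta> j * (15/16 - Fz \<pi> T \<Delta> \<sigma> j (m j) (\<sigma> j) - (\<integral>h. real (cnt j h) \<partial>P) / m j)"
      using \<gamma>[of j] j mpos[of j] by (auto simp: field_simps)
    also have "\<dots> \<le> p j * \<Delta> j * (1 - (\<integral>h. pmf (rec_rule \<pi> h j) (\<sigma> j) \<partial>P))"
      using cb pd by (intro mult_left_mono) auto
    finally show "p j * \<Delta> j * (15/16 - Fz \<pi> T \<Delta> \<sigma> j (m j) (\<sigma> j)) - \<gamma> * (\<integral>h. real (cnt j h) \<partial>P)
        \<le> p j * (\<Delta> j * (1 - (\<integral>h. pmf (rec_rule \<pi> h j) (\<sigma> j) \<partial>P)))" by (simp add: mult.assoc)
  qed
  also have "(\<Sum>j<k. p j * \<Delta> j * (15/16 - Fz \<pi> T \<Delta> \<sigma> j (m j) (\<sigma> j)) - \<gamma> * (\<integral>h. real (cnt j h) \<partial>P))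
     = (\<Sum>j<k. p j * \<Delta> j * (15/16 - Fz \<pi> T \<Delta> \<sigma> j (m j) (\<sigma> j))) - \<gamma> * (\<integral>h. (\<Sum>j<k. real (cnt j h)) \<partial>P)"
  proof -
    have ic: "integrable (measure_pmf P) (\<lambda>h. real (cnt j h))" for j
      unfolding P_def by (rule int_hist[where B="real T"]) (auto simp: cnt_def)
    show ?thesis by (simp add: Bochner_Integration.integral_sum[OF ic] sum_subtractf sum_distrib_left)
  qed
  moreover have "(\<integral>h. (\<Sum>j<k. real (cnt j h)) \<partial>P) \<le> real T"
  proof (rule measure_pmf.integral_le_const)
    show "integrable (measure_pmf P) (\<lambda>h. \<Sum>j<k. real (cnt j h))"
      unfolding P_def by (rule int_hist[where B="real T"]) (use sum_cnt in \<open>auto simp: sum_nonneg\<close>)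
    show "AE h in measure_pmf P. (\<Sum>j<k. real (cnt j h)) \<le> real T"
      unfolding P_def by (rule AE_pmfI) (use sum_cnt hist'_length in metis)
  qed
  then have "\<gamma> * (\<integral>h. (\<Sum>j<k. real (cnt j h)) \<partial>P) \<le> \<gamma> * real T" using \<gamma>0 by (rule mult_left_mono)
  ultimately show ?thesis by argo
qed

lemma avg_lower:
  fixes \<Delta> :: "nat \<Rightarrow> real" and m :: "nat \<Rightarrow> real"
  assumes d: "\<And>c. 0 \<le> \<Delta> c" "\<And>c. \<Delta> c \<le> 1/4" and mpos: "\<And>j. j < k \<Longrightarrow> 0 < m j"
  and pnn: "\<And>j. j < k \<Longrightarrow> 0 \<le> p j"
  and \<gamma>: "\<And>j. j < k \<Longrightarrow> p j * \<Delta> j / m j = \<gamma>" and \<gamma>0: "0 \<le> \<gamma>"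
  and kl: "\<And>j. j < k \<Longrightarrow> 17 * klv (\<Delta> j) * (m j + 1) \<le> real n / 16"
  and n2: "2 \<le> n"
  shows "\<exists>\<sigma>\<in>PiE {..<k} (\<lambda>_. {..<n}). simple_regret n k \<pi> T (inst \<Delta> \<sigma>) p \<ge>
     (3/8) * (\<Sum>j<k. p j * \<Delta> j) - \<gamma> * real T"
proof (rule ccontr)
  define Sig where "Sig = PiE {..<k} (\<lambda>_::nat. {..<n})"
  define X where "X = (3/8) * (\<Sum>j<k. p j * \<Delta> j) - \<gamma> * real T"
  define R where "R = (\<lambda>\<sigma>. (\<Sum>j<k. p j * \<Delta> j * (15/16 - Fz \<pi> T \<Delta> \<sigma> j (m j) (\<sigma> j))) - \<gamma> * real T)"
  assume "\<not> ?thesis"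
  then have lt: "\<And>\<sigma>. \<sigma> \<in> Sig \<Longrightarrow> simple_regret n k \<pi> T (inst \<Delta> \<sigma>) p < X"
    unfolding Sig_def X_def by auto
  have fin: "finite Sig" unfolding Sig_def by (simp add: finite_PiE)
  have "0 \<in> {..<n}" using n2 by simp
  then have ne: "Sig \<noteq> {}" unfolding Sig_def by (auto simp: PiE_eq_empty_iff)
  have cpos: "0 < card Sig" using fin ne by (simp add: card_gt_0_iff)
  have Rle: "\<And>\<sigma>. \<sigma> \<in> Sig \<Longrightarrow> R \<sigma> \<le> simple_regret n k \<pi> T (inst \<Delta> \<sigma>) p"
    unfolding R_def Sig_def by (rule regret_lower[OF d mpos _ pnn \<gamma> \<gamma>0]) (auto simp: PiE_iff)
  have Fsum: "(\<Sum>\<sigma>\<in>Sig. Fz \<pi> T \<Delta> \<sigma> j (m j) (\<sigma> j)) \<le> real (card Sig) * (9/16)" if j: "j < k" for j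
  proof -
    have "real n * (\<Sum>\<sigma>\<in>Sig. Fz \<pi> T \<Delta> \<sigma> j (m j) (\<sigma> j)) = (\<Sum>\<sigma>\<in>Sig. \<Sum>i<n. Fz \<pi> T \<Delta> \<sigma> j (m j) i)"
      using avg_swap[of j "{..<k}" "{..<n}" "\<lambda>\<sigma> i. Fz \<pi> T \<Delta> \<sigma> j (m j) i"] j
      unfolding Sig_def by (simp add: Fz_inv)
    also have "\<dots> \<le> (\<Sum>\<sigma>\<in>Sig. 1 + real n / 16)"
    proof (rule sum_mono)
      fix \<sigma> show "(\<Sum>i<n. Fz \<pi> T \<Delta> \<sigma> j (m j) i) \<le> 1 + real n / 16"
        using Fz_sum[where \<Delta>=\<Delta> and j=j and m="m j" and n=n and \<pi>=\<pi> and T=T and \<sigma>=\<sigma>] d[of j] mpos[OF j] kl[OF j] by simp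
    qed
    also have "\<dots> = real (card Sig) * (1 + real n / 16)" by simp
    finally have a: "real n * (\<Sum>\<sigma>\<in>Sig. Fz \<pi> T \<Delta> \<sigma> j (m j) (\<sigma> j)) \<le> real (card Sig) * (1 + real n / 16)" .
    have "real (card Sig) * (1 + real n / 16) \<le> real n * (real (card Sig) * (9/16))"
    proof -
      have c2: "2 * real (card Sig) \<le> real n * real (card Sig)" using n2 by (intro mult_right_mono) auto
      then show ?thesis by (simp add: field_simps)
    qed
    with a have "real n * (\<Sum>\<sigma>\<in>Sig. Fz \<pi> T \<Delta> \<sigma> j (m j) (\<sigma> j)) \<le> real n * (real (card Sig) * (9/16))"
      by linarith
    then show ?thesis using n2 by simp
  qed
  have "(\<Sum>\<sigma>\<in>Sig. R \<sigma>) = (\<Sum>j<k. p j * \<Delta> j * (real (card Sig) * (15/16) - (\<Sum>\<sigma>\<in>Sig. Fz \<pi> T \<Delta> \<sigma> j (m j) (\<sigma> j))))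
        - real (card Sig) * (\<gamma> * real T)"
    unfolding R_def by (simp add: sum_subtractf sum.swap[of _ Sig] sum_distrib_left right_diff_distrib mult_ac)
  also have "\<dots> \<ge> (\<Sum>j<k. p j * \<Delta> j * (real (card Sig) * (15/16) - real (card Sig) * (9/16)))
        - real (card Sig) * (\<gamma> * real T)"
  proof -
    have "(\<Sum>j<k. p j * \<Delta> j * (real (card Sig) * (15/16) - real (card Sig) * (9/16))) \<le>
       (\<Sum>j<k. p j * \<Delta> j * (real (card Sig) * (15/16) - (\<Sum>\<sigma>\<in>Sig. Fz \<pi> T \<Delta> \<sigma> j (m j) (\<sigma> j))))"
    proof (rule sum_mono)
      fix j assume "j \<in> {..<k}"
      then show "p j * \<Delta> j * (real (card Sig) * (15/16) - real (card Sig) * (9/16)) \<le>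
       p j * \<Delta> j * (real (card Sig) * (15/16) - (\<Sum>\<sigma>\<in>Sig. Fz \<pi> T \<Delta> \<sigma> j (m j) (\<sigma> j)))"
        using Fsum[of j] pnn[of j] d(1)[of j] by (intro mult_left_mono) auto
    qed
    then show ?thesis by linarith
  qed
  also have "(\<Sum>j<k. p j * \<Delta> j * (real (card Sig) * (15/16) - real (card Sig) * (9/16))) - real (card Sig) * (\<gamma> * real T)
      = real (card Sig) * X"
    unfolding X_def by (simp add: sum_distrib_left sum_distrib_right algebra_simps)
  finally have "real (card Sig) * X \<le> (\<Sum>\<sigma>\<in>Sig. R \<sigma>)" .
  also have "\<dots> \<le> (\<Sum>\<sigma>\<in>Sig. simple_regret n k \<pi> T (inst \<Delta> \<sigma>) p)"
    by (rule sum_mono) (rule Rle)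
  also have "\<dots> < (\<Sum>\<sigma>\<in>Sig. X)"
    by (rule sum_strict_mono[OF fin ne]) (rule lt)
  also have "\<dots> = real (card Sig) * X" by simp
  finally show False by simp
qed

lemma powr_third_cube: "0 < x \<Longrightarrow> (x powr (1/3)) ^ 3 = (x::real)"
  by (subst powr_power) auto

lemma powr_third_sq: "0 < x \<Longrightarrow> (x powr (1/3)) ^ 2 = (x::real) powr (2/3)"
  by (subst powr_power) auto

lemma main_bound:
  fixes n k T :: nat and p :: "nat \<Rightarrow> real" and \<pi> :: policy
  assumes n2: "n \<ge> 2" and k1: "k \<ge> 1" and pp: "\<forall>j<k. p j > 0" and ps: "(\<Sum>j<k. p j) = 1"
  and TT: "real T \<ge> 1 * real n / Min (p ` {..<k})"
  shows "worst_simple_regret n k \<pi> T p \<ge> 1/600 * sqrt (real n / real T) * norm_two_thirds k p"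
proof -
  define pm where "pm = Min (p ` {..<k})"
  have fin: "finite (p ` {..<k})" by simp
  have "0 \<in> {..<k}" using k1 by simp
  then have ne: "p ` {..<k} \<noteq> {}" by blast
  have pm_in: "pm \<in> p ` {..<k}" unfolding pm_def using fin ne by (rule Min_in)
  have pm_pos: "0 < pm" using pm_in pp by auto
  have pm_le: "\<And>j. j < k \<Longrightarrow> pm \<le> p j" unfolding pm_def using fin by (auto intro: Min_le)
  have npos: "0 < real n" using n2 by simp
  have Tpm: "real n \<le> real T * pm" using TT pm_pos by (simp add: pm_def[symmetric] divide_le_eq)
  have "0 < real T * pm" using Tpm npos by linarith
  then have Tpos: "0 < real T" using pm_pos by (auto simp: zero_less_mult_iff)
  define q where "q = (\<lambda>j. p j powr (1/3))"
  define qm where "qm = pm powr (1/3)"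
  have qpos: "\<And>j. j < k \<Longrightarrow> 0 < q j" using pp by (auto simp: q_def)
  have q3: "\<And>j. j < k \<Longrightarrow> q j ^ 3 = p j" using pp by (simp add: q_def powr_third_cube)
  have qmpos: "0 < qm" using pm_pos by (simp add: qm_def)
  have qm3: "qm ^ 3 = pm" using pm_pos by (simp add: qm_def powr_third_cube)
  have qm_le: "\<And>j. j < k \<Longrightarrow> qm \<le> q j" unfolding qm_def q_def using pm_le pm_pos by (intro powr_mono2) auto
  define S where "S = (\<Sum>j<k. q j ^ 2)"
  have Spos: "0 < S" unfolding S_def
  proof (rule sum_pos)
    show "{..<k} \<noteq> {}" using \<open>0 \<in> {..<k}\<close> by blast
    fix j assume "j \<in> {..<k}" then show "0 < q j ^ 2" using qpos[of j] by simp
  qed simp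
  have S_le: "S \<le> 1 / qm"
  proof -
    have "S \<le> (\<Sum>j<k. p j / qm)" unfolding S_def
    proof (rule sum_mono)
      fix j assume j: "j \<in> {..<k}"
      have "q j ^ 2 * qm \<le> q j ^ 2 * q j" using qm_le[of j] j by (intro mult_left_mono) auto
      also have "\<dots> = p j" using q3[of j] j by (simp add: power3_eq_cube power2_eq_square)
      finally show "q j ^ 2 \<le> p j / qm" using qmpos by (simp add: le_divide_eq)
    qed
    also have "\<dots> = 1 / qm" using ps by (simp add: sum_divide_distrib[symmetric])
    finally show ?thesis .
  qed
  have pmS: "\<And>j. j < k \<Longrightarrow> pm * S \<le> q j ^ 2"
  proof -
    fix j assume j: "j < k"
    have "pm * S \<le> pm * (1 / qm)" using S_le pm_pos by (intro mult_left_mono) auto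
    also have "\<dots> = qm ^ 2" using qm3 qmpos by (simp add: power3_eq_cube power2_eq_square field_simps)
    also have "\<dots> \<le> q j ^ 2" using qm_le[OF j] qmpos by (intro power_mono) auto
    finally show "pm * S \<le> q j ^ 2" .
  qed
  define b where "b = sqrt (real n * S / (17408 * real T))"
  have bnn: "0 \<le> b" unfolding b_def using Spos Tpos by simp
  have b2: "b ^ 2 = real n * S / (17408 * real T)" unfolding b_def using Spos Tpos by simp
  define \<Delta> where "\<Delta> = (\<lambda>c. if c < k then b / q c else 0)"
  define m where "m = (\<lambda>j. 8 * real T * q j ^ 2 / S)"
  define \<gamma> where "\<gamma> = b * S / (8 * real T)"
  have nS: "\<And>j. j < k \<Longrightarrow> real n * S \<le> real T * q j ^ 2"
  proof -
    fix j assume j: "j < k"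
    have "real n * S \<le> real T * pm * S" using Tpm Spos by (intro mult_right_mono) auto
    also have "\<dots> \<le> real T * q j ^ 2" using pmS[OF j] Tpos by (simp add: mult.assoc)
    finally show "real n * S \<le> real T * q j ^ 2" .
  qed
  have d0: "\<And>c. 0 \<le> \<Delta> c" unfolding \<Delta>_def using bnn qpos by (simp add: less_imp_le)
  have d1: "\<And>c. \<Delta> c \<le> 1/4"
  proof -
    fix c show "\<Delta> c \<le> 1/4"
    proof (cases "c < k")
      case True
      have B: "0 \<le> real T * q c ^ 2" by simp
      have C: "real n * S \<le> 1088 * (real T * q c ^ 2)" using nS[OF True] B by linarith
      have "real n * S / (17408 * real T) \<le> (q c / 4) ^ 2"
        using C Tpos by (simp add: field_simps power2_eq_square mult_ac)
      then have "b \<le> sqrt ((q c / 4) ^ 2)" unfolding b_def by (rule real_sqrt_le_mono)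
      also have "\<dots> = q c / 4" using qpos[OF True] by simp
      finally show ?thesis using True qpos[OF True] by (simp add: \<Delta>_def divide_le_eq mult.commute)
    qed (simp add: \<Delta>_def)
  qed
  have mge: "\<And>j. j < k \<Longrightarrow> 1 \<le> m j"
  proof -
    fix j assume j: "j < k"
    have "1 \<le> 8 * real n" using n2 by simp
    also have "\<dots> \<le> 8 * (real T * pm)" using Tpm by simp
    also have "\<dots> \<le> 8 * real T * q j ^ 2 / S" using pmS[OF j] Spos Tpos
      by (simp add: field_simps)
    finally show "1 \<le> m j" by (simp add: m_def)
  qed
  have mpos: "\<And>j. j < k \<Longrightarrow> 0 < m j" using mge by (meson less_le_trans zero_less_one)
  have pnn: "\<And>j. j < k \<Longrightarrow> 0 \<le> p j" using pp by (simp add: less_imp_le)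
  have pD: "\<And>j. j < k \<Longrightarrow> p j * \<Delta> j = b * q j ^ 2"
  proof -
    fix j assume j: "j < k"
    have e: "p j = q j * (q j * q j)" using q3[OF j] by (simp add: power3_eq_cube)
    have nz: "q j \<noteq> 0" using qpos[OF j] by simp
    show "p j * \<Delta> j = b * q j ^ 2" unfolding e using j nz by (simp add: \<Delta>_def power2_eq_square field_simps)
  qed
  have g: "\<And>j. j < k \<Longrightarrow> p j * \<Delta> j / m j = \<gamma>"
  proof -
    fix j assume j: "j < k"
    have nz: "q j \<noteq> 0" using qpos[OF j] by simp
    show "p j * \<Delta> j / m j = \<gamma>" unfolding pD[OF j] using nz Spos Tpos by (simp add: m_def \<gamma>_def field_simps power2_eq_square)
  qed
  have g0: "0 \<le> \<gamma>" unfolding \<gamma>_def using bnn Spos Tpos by simp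
  have kl: "\<And>j. j < k \<Longrightarrow> 17 * klv (\<Delta> j) * (m j + 1) \<le> real n / 16"
  proof -
    fix j assume j: "j < k"
    have k1': "klv (\<Delta> j) \<le> 4 * \<Delta> j ^ 2" unfolding klv_def by (rule kl_bound[OF d0 d1])
    have "17 * klv (\<Delta> j) * (m j + 1) \<le> 17 * (4 * \<Delta> j ^ 2) * (m j + 1)"
      using k1' mge[OF j] by (intro mult_right_mono) auto
    also have "\<dots> \<le> 17 * (4 * \<Delta> j ^ 2) * (2 * m j)"
      using mge[OF j] by (intro mult_left_mono) auto
    also have "17 * (4 * \<Delta> j ^ 2) * (2 * m j) = 136 * (\<Delta> j ^ 2 * m j)" by (simp add: algebra_simps)
    also have "\<dots> = 136 * (8 * real T * b ^ 2 / S)"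
    proof -
      have "\<Delta> j ^ 2 * m j = 8 * real T * b ^ 2 / S"
        using qpos[OF j] j by (simp add: \<Delta>_def m_def power_divide field_simps)
      then show ?thesis by simp
    qed
    also have "\<dots> = real n / 16"
    proof -
      have "8 * real T * b ^ 2 / S = real n / 2176" unfolding b2 using Spos Tpos by (simp add: field_simps)
      then show ?thesis by simp
    qed
    finally show "17 * klv (\<Delta> j) * (m j + 1) \<le> real n / 16" .
  qed
  from avg_lower[OF d0 d1 mpos pnn g g0 kl n2] obtain \<sigma> where "\<sigma> \<in> PiE {..<k} (\<lambda>_. {..<n})" and reg:
    "simple_regret n k \<pi> T (inst \<Delta> \<sigma>) p \<ge> (3/8) * (\<Sum>j<k. p j * \<Delta> j) - \<gamma> * real T" ..
  have sumpD: "(\<Sum>j<k. p j * \<Delta> j) = b * S" unfolding S_def by (simp add: pD sum_distrib_left)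
  have gT: "\<gamma> * real T = b * S / 8" unfolding \<gamma>_def using Tpos by simp
  have W: "simple_regret n k \<pi> T (inst \<Delta> \<sigma>) p \<le> worst_simple_regret n k \<pi> T p"
    using worst_ge[of n k p \<pi> T \<Delta> \<sigma>] n2 pnn by simp
  have "b * S / 4 = (3/8) * (b * S) - b * S / 8" by simp
  then have R: "b * S / 4 \<le> worst_simple_regret n k \<pi> T p"
    using reg W unfolding sumpD gT by linarith
  have norm: "norm_two_thirds k p = S * sqrt S"
  proof -
    have "(\<Sum>j<k. p j powr (2/3)) = S" unfolding S_def q_def using pp by (intro sum.cong) (auto simp: powr_third_sq)
    then have "norm_two_thirds k p = S powr (1 + 1/2)" by (simp add: norm_two_thirds_def)
    also have "\<dots> = S powr 1 * S powr (1/2)" by (rule powr_add)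
    also have "\<dots> = S * sqrt S" using Spos by (simp add: powr_half_sqrt)
    finally show ?thesis .
  qed
  have sq: "sqrt (17408::real) \<le> 150"
    by (rule real_le_lsqrt) auto
  have bS: "b = sqrt (real n / real T) * sqrt S / sqrt 17408"
    unfolding b_def by (simp add: real_sqrt_mult real_sqrt_divide field_simps)
  have "1/600 * sqrt (real n / real T) * norm_two_thirds k p = sqrt (real n / real T) * sqrt S * S / 600"
    unfolding norm by simp
  also have "\<dots> \<le> sqrt (real n / real T) * sqrt S * S / (4 * sqrt 17408)"
    using sq Spos by (intro divide_left_mono) auto
  also have "\<dots> = b * S / 4" unfolding bS by simp
  finally show ?thesis using R by linarith
qed

theorem lemma2:
  shows "\<exists>c > 0. \<exists>C > 0. \<forall>(n::nat) (k::nat) (T::nat) (p::nat \<Rightarrow> real) (\<pi>::policy).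
     n \<ge> 2 \<longrightarrow> k \<ge> 1 \<longrightarrow> (\<forall>j<k. p j > 0) \<longrightarrow> (\<Sum>j<k. p j) = 1 \<longrightarrow>
     valid_policy n k \<pi> \<longrightarrow>
     real T \<ge> C * real n / Min (p ` {..<k}) \<longrightarrow>
     worst_simple_regret n k \<pi> T p \<ge> c * sqrt (real n / real T) * norm_two_thirds k p"
proof (rule exI[of _ "1/600::real"], rule conjI)
  show "(0::real) < 1/600" by simp
  show "\<exists>C > 0. \<forall>(n::nat) (k::nat) (T::nat) (p::nat \<Rightarrow> real) (\<pi>::policy).
     n \<ge> 2 \<longrightarrow> k \<ge> 1 \<longrightarrow> (\<forall>j<k. p j > 0) \<longrightarrow> (\<Sum>j<k. p j) = 1 \<longrightarrow>
     valid_policy n k \<pi> \<longrightarrow>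
     real T \<ge> C * real n / Min (p ` {..<k}) \<longrightarrow>
     worst_simple_regret n k \<pi> T p \<ge> 1/600 * sqrt (real n / real T) * norm_two_thirds k p"
  proof (rule exI[of _ "1::real"], rule conjI)
    show "(0::real) < 1" by simp
    show "\<forall>(n::nat) (k::nat) (T::nat) (p::nat \<Rightarrow> real) (\<pi>::policy).
     n \<ge> 2 \<longrightarrow> k \<ge> 1 \<longrightarrow> (\<forall>j<k. p j > 0) \<longrightarrow> (\<Sum>j<k. p j) = 1 \<longrightarrow>
     valid_policy n k \<pi> \<longrightarrow>
     real T \<ge> 1 * real n / Min (p ` {..<k}) \<longrightarrow>
     worst_simple_regret n k \<pi> T p \<ge> 1/600 * sqrt (real n / real T) * norm_two_thirds k p"
      using main_bound by blast
  qed
qed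

end
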